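(* For $m=1,\dots,N$ let $\mathcal{E}^{(m)}=\{\sigma^{(m)}_i,q^{(m)}_i\}_{i=1}^{k_m}$ be an ensemble of states on a finite-dimensional space $\mathcal H_m$, and let $\{\Pi^{(m)}_i\}_{i=1}^{k_m}$ be a POVM attaining the optimal minimum-error success probability for $\mathcal E^{(m)}$. Then the product POVM $\{\Pi^{(1)}_{i_1}\otimes\cdots\otimes\Pi^{(N)}_{i_N}\}$ attains the optimal minimum-error success probability for the product ensemble $\{\sigma^{(1)}_{i_1}\otimes\cdots\otimes\sigma^{(N)}_{i_N},\,q^{(1)}_{i_1}\cdots q^{(N)}_{i_N}\}$ on $\mathcal H_1\otimes\cdots\otimes\mathcal H_N$. Consequently the product ensemble can be optimally distinguished by $N$-party LOCC (each party $m$ measuring $\{\Pi^{(m)}_i\}$ locally).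
   Context: For an ensemble $\{\rho_i,p_i\}$, the success probability of a POVM $\{\Pi_i\}$ is $\sum_ip_i\,\mathrm{tr}(\Pi_i\rho_i)$; the optimal minimum-error success probability is its maximum over all POVMs with the same index set. Party $m$ holds system $\mathcal H_m$. *)

theory Defs
  imports "Jordan_Normal_Form.Matrix" "Jordan_Normal_Form.Schur_Decomposition"
begin

definition mtrace :: "complex mat \<Rightarrow> complex" where
  "mtrace A = (\<Sum>i<dim_row A. A $$ (i,i))"

definition psd :: "nat \<Rightarrow> complex mat \<Rightarrow> bool" where
  "psd n A \<longleftrightarrow> A \<in> carrier_mat n n \<and> mat_adjoint A = A \<and>
     (\<forall>v \<in> carrier_vec n. Im ((A *\<^sub>v v) \<bullet>c v) = 0 \<and> Re ((A *\<^sub>v v) \<bullet>c v) \<ge> 0)"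

definition density :: "nat \<Rightarrow> complex mat \<Rightarrow> bool" where
  "density n \<rho> \<longleftrightarrow> psd n \<rho> \<and> mtrace \<rho> = 1"

definition msum :: "nat \<Rightarrow> ('i \<Rightarrow> complex mat) \<Rightarrow> 'i set \<Rightarrow> complex mat" where
  "msum n M I = mat n n (\<lambda>(a,b). \<Sum>i\<in>I. M i $$ (a,b))"

definition povm :: "nat \<Rightarrow> 'i set \<Rightarrow> ('i \<Rightarrow> complex mat) \<Rightarrow> bool" where
  "povm n I P \<longleftrightarrow> finite I \<and> (\<forall>i\<in>I. psd n (P i)) \<and> msum n P I = 1\<^sub>m n"

definition ensemble :: "nat \<Rightarrow> 'i set \<Rightarrow> ('i \<Rightarrow> real) \<Rightarrow> ('i \<Rightarrow> complex mat) \<Rightarrow> bool" where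
  "ensemble n I p \<rho> \<longleftrightarrow> finite I \<and> (\<forall>i\<in>I. p i \<ge> 0 \<and> density n (\<rho> i)) \<and> (\<Sum>i\<in>I. p i) = 1"

(* success probability sum_i p_i tr(P_i rho_i) (real-valued for PSD operators) *)
definition success :: "'i set \<Rightarrow> ('i \<Rightarrow> real) \<Rightarrow> ('i \<Rightarrow> complex mat) \<Rightarrow> ('i \<Rightarrow> complex mat) \<Rightarrow> real" where
  "success I p \<rho> P = (\<Sum>i\<in>I. p i * Re (mtrace (P i * \<rho> i)))"

definition optimal_povm :: "nat \<Rightarrow> 'i set \<Rightarrow> ('i \<Rightarrow> real) \<Rightarrow> ('i \<Rightarrow> complex mat) \<Rightarrow> ('i \<Rightarrow> complex mat) \<Rightarrow> bool" where
  "optimal_povm n I p \<rho> P \<longleftrightarrow> povm n I P \<and>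
     (\<forall>Q. povm n I Q \<longrightarrow> success I p \<rho> Q \<le> success I p \<rho> P)"

definition kron :: "complex mat \<Rightarrow> complex mat \<Rightarrow> complex mat" where
  "kron A B = mat (dim_row A * dim_row B) (dim_col A * dim_col B)
     (\<lambda>(i,j). A $$ (i div dim_row B, j div dim_col B) * B $$ (i mod dim_row B, j mod dim_col B))"

definition kron_list :: "complex mat list \<Rightarrow> complex mat" where
  "kron_list As = foldr kron As (1\<^sub>m 1)"

definition tuples :: "nat \<Rightarrow> (nat \<Rightarrow> nat) \<Rightarrow> nat list set" where
  "tuples N k = {t. length t = N \<and> (\<forall>m<N. t ! m < k m)}"

end

theory Submission
  imports Defs
begin


definition qf :: "nat \<Rightarrow> (nat \<Rightarrow> nat \<Rightarrow> complex) \<Rightarrow> (nat \<Rightarrow> complex) \<Rightarrow> complex" where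
  "qf n f x = (\<Sum>a<n. \<Sum>b<n. cnj (x a) * f a b * x b)"
definition bf :: "nat \<Rightarrow> (nat \<Rightarrow> nat \<Rightarrow> complex) \<Rightarrow> (nat \<Rightarrow> complex) \<Rightarrow> (nat \<Rightarrow> complex) \<Rightarrow> complex" where
  "bf n f x y = (\<Sum>a<n. \<Sum>b<n. cnj (x a) * f a b * y b)"
definition herm :: "nat \<Rightarrow> (nat \<Rightarrow> nat \<Rightarrow> complex) \<Rightarrow> bool" where
  "herm n f \<longleftrightarrow> (\<forall>a<n. \<forall>b<n. f b a = cnj (f a b))"
definition gramF :: "nat \<Rightarrow> (nat \<Rightarrow> nat \<Rightarrow> complex) \<Rightarrow> bool" where
  "gramF n f \<longleftrightarrow> (\<exists>us::(nat\<Rightarrow>complex) list. \<forall>a<n. \<forall>b<n. f a b = (\<Sum>u\<leftarrow>us. u a * cnj (u b)))"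
definition dl :: "nat \<Rightarrow> nat \<Rightarrow> complex" where "dl i a = (if a = i then 1 else 0)"

lemma qf_bf: "qf n f x = bf n f x x" by (simp add: qf_def bf_def)

lemma bf_add_left: "bf n f (\<lambda>a. u a + v a) w = bf n f u w + bf n f v w"
  by (simp add: bf_def algebra_simps sum.distrib)
lemma bf_add_right: "bf n f w (\<lambda>a. u a + v a) = bf n f w u + bf n f w v"
  by (simp add: bf_def algebra_simps sum.distrib)
lemma bf_scale_left: "bf n f (\<lambda>a. c * u a) w = cnj c * bf n f u w"
  by (simp add: bf_def sum_distrib_left algebra_simps)
lemma bf_scale_right: "bf n f w (\<lambda>a. c * u a) = c * bf n f w u"
  by (simp add: bf_def sum_distrib_left algebra_simps)

lemma bf_dl_left: assumes "i < n" shows "bf n f (dl i) y = (\<Sum>b<n. f i b * y b)"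
proof -
  have "\<And>a. (\<Sum>b<n. cnj (dl i a) * f a b * y b) = (if a = i then (\<Sum>b<n. f i b * y b) else 0)"
    by (simp add: dl_def)
  then show ?thesis using assms by (simp add: bf_def)
qed
lemma bf_dl_right: assumes "j < n" shows "bf n f x (dl j) = (\<Sum>a<n. cnj (x a) * f a j)"
proof -
  have "\<And>a. (\<Sum>b<n. cnj (x a) * f a b * dl j b) = (\<Sum>b<n. if b = j then cnj (x a) * f a j else 0)"
    by (intro sum.cong) (auto simp add: dl_def)
  then show ?thesis using assms by (simp add: bf_def)
qed

lemma bf_herm: assumes "herm n f" shows "bf n f y x = cnj (bf n f x y)"
proof -
  have "cnj (bf n f x y) = (\<Sum>a<n. \<Sum>b<n. x a * cnj (f a b) * cnj (y b))"
    by (simp add: bf_def)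
  also have "\<dots> = (\<Sum>a<n. \<Sum>b<n. x a * f b a * cnj (y b))"
  proof -
    have h: "\<And>a b. a<n \<Longrightarrow> b<n \<Longrightarrow> cnj (f a b) = f b a"
      using assms unfolding herm_def by (metis complex_cnj_cnj)
    show ?thesis by (rule sum.cong[OF refl], rule sum.cong[OF refl]) (simp add: h)
  qed
  also have "\<dots> = bf n f y x"
    unfolding bf_def by (subst (2) sum.swap) (simp add: mult_ac)
  finally show ?thesis by simp
qed

lemma qf_real: assumes "herm n f" shows "Im (qf n f x) = 0"
proof -
  have "qf n f x = cnj (qf n f x)" using bf_herm[OF assms, of x x] by (simp add: qf_bf)
  then have "Im (qf n f x) = Im (cnj (qf n f x))" by simp
  then show ?thesis by simp
qed

lemma qf_add: "qf n f (\<lambda>a. u a + v a) = qf n f u + bf n f u v + bf n f v u + qf n f v"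
  by (simp add: qf_bf bf_add_left bf_add_right)

lemma dl_qf: "i < n \<Longrightarrow> qf n f (dl i) = f i i"
proof -
  assume i: "i < n"
  have "(\<Sum>b<n. f i b * dl i b) = (\<Sum>b<n. if b = i then f i i else 0)"
    by (intro sum.cong) (auto simp add: dl_def)
  then show ?thesis using i by (simp add: qf_bf bf_dl_left)
qed

lemma hermD: "herm n f \<Longrightarrow> a < n \<Longrightarrow> b < n \<Longrightarrow> f b a = cnj (f a b)"
  unfolding herm_def by blast

lemma sum_dl: "j < n \<Longrightarrow> (\<Sum>b<n. g b * dl j b) = g j"
proof -
  assume j: "j < n"
  have "(\<Sum>b<n. g b * dl j b) = (\<Sum>b<n. if b = j then g j else 0)"
    by (intro sum.cong) (auto simp add: dl_def)
  then show ?thesis using j by simp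
qed

lemma bf_dl_dl: "i < n \<Longrightarrow> j < n \<Longrightarrow> bf n f (dl i) (dl j) = f i j"
  by (simp add: bf_dl_left sum_dl)

lemma zero_row:
  assumes h: "herm n f" and pos: "\<forall>x. 0 \<le> Re (qf n f x)" and i: "i < n" and j: "j < n"
    and z: "f i i = 0"
  shows "f i j = 0"
proof (rule ccontr)
  assume nz: "f i j \<noteq> 0"
  define z where "z = f i j"
  have ij: "i \<noteq> j" using nz z by auto
  define nz2 where "nz2 = (Re z)^2 + (Im z)^2"
  have nz2: "nz2 > 0" using nz unfolding nz2_def z_def
    by (auto simp: sum_power2_gt_zero_iff complex_eq_iff)
  define t where "t = (Re (f j j) + 1) / (2 * nz2)"
  define s where "s = - (complex_of_real t * z)"
  define x where "x = (\<lambda>a. s * dl i a + dl j a)"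
  have fji: "f j i = cnj z" using hermD[OF h i j] z_def by simp
  have "qf n f x = qf n f (\<lambda>a. s * dl i a) + bf n f (\<lambda>a. s * dl i a) (dl j)
      + bf n f (dl j) (\<lambda>a. s * dl i a) + qf n f (dl j)"
    unfolding x_def by (rule qf_add)
  also have "\<dots> = cnj s * (s * f i i) + cnj s * f i j + s * f j i + f j j"
    by (simp add: qf_bf bf_scale_left bf_scale_right bf_dl_dl i j)
  also have "\<dots> = cnj s * z + s * cnj z + f j j" using z fji z_def by simp
  finally have q: "qf n f x = cnj s * z + s * cnj z + f j j" .
  have "Re (qf n f x) = Re (f j j) - 2 * t * nz2"
    unfolding q s_def nz2_def by (simp add: power2_eq_square algebra_simps)
  also have "\<dots> = -1" unfolding t_def using nz2 by (simp add: field_simps)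
  finally show False using pos by (metis neg_0_le_iff_le not_one_le_zero)
qed

lemma qf_diff: "qf n (\<lambda>a b. f a b - h a b) x = qf n f x - qf n h x"
  unfolding qf_def by (simp add: right_diff_distrib left_diff_distrib sum_subtractf)

lemma qf_outer: "qf n (\<lambda>a b. u a * v b / c) x = (\<Sum>a<n. cnj (x a) * u a) * (\<Sum>b<n. v b * x b) / c"
proof -
  have "qf n (\<lambda>a b. u a * v b / c) x = (\<Sum>a<n. \<Sum>b<n. (cnj (x a) * u a) * (v b * x b) / c)"
    unfolding qf_def by (intro sum.cong refl) (simp add: mult_ac)
  also have "\<dots> = (\<Sum>a<n. (cnj (x a) * u a) * (\<Sum>b<n. v b * x b) / c)"
    by (simp add: sum_distrib_left sum_divide_distrib)
  also have "\<dots> = (\<Sum>a<n. cnj (x a) * u a) * (\<Sum>b<n. v b * x b) / c"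
    by (simp add: sum_distrib_right sum_divide_distrib)
  finally show ?thesis .
qed

lemma peel:
  assumes h: "herm n f" and pos: "\<forall>x. 0 \<le> Re (qf n f x)" and i: "i < n"
    and nz: "f i i \<noteq> 0"
    and g_def: "g = (\<lambda>a b. f a b - f a i * f i b / f i i)"
  shows "herm n g" "\<forall>x. 0 \<le> Re (qf n g x)" "g i i = 0"
    "\<And>j. j < n \<Longrightarrow> f j j = 0 \<Longrightarrow> g j j = 0"
    "\<exists>v. \<forall>a<n. \<forall>b<n. f a b = v a * cnj (v b) + g a b"
proof -
  define r where "r = Re (f i i)"
  have "Im (f i i) = Im (cnj (f i i))" using hermD[OF h i i] by simp
  then have "Im (f i i) = 0" by simp
  then have fiireal: "f i i = complex_of_real r"
    unfolding r_def by (simp add: complex_eq_iff)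
  have r0: "r \<ge> 0" using pos[rule_format, of "dl i"] dl_qf[OF i, of f] r_def by simp
  have rpos: "r > 0" using r0 nz fiireal by (cases "r = 0") auto
  show "herm n g" unfolding herm_def g_def
  proof (intro allI impI)
    fix a b assume a: "a < n" and b: "b < n"
    have e1: "f b a = cnj (f a b)" "f i a = cnj (f a i)" "f b i = cnj (f i b)"
      using hermD[OF h a b] hermD[OF h a i] hermD[OF h i b] by auto
    show "f b a - f b i * f i a / f i i = cnj (f a b - f a i * f i b / f i i)"
      by (simp only: e1) (simp add: fiireal mult.commute)
  qed
  show "g i i = 0" unfolding g_def using nz by simp
  show "\<And>j. j < n \<Longrightarrow> f j j = 0 \<Longrightarrow> g j j = 0"
  proof -
    fix j assume j: "j < n" and fj: "f j j = 0"
    have "f j i = 0" using zero_row[OF h pos j i fj] .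
    then show "g j j = 0" unfolding g_def using fj by simp
  qed
  show "\<exists>v. \<forall>a<n. \<forall>b<n. f a b = v a * cnj (v b) + g a b"
  proof (intro exI allI impI)
    fix a b assume a: "a < n" and b: "b < n"
    have sq: "complex_of_real (sqrt r) * complex_of_real (sqrt r) = complex_of_real r"
      using r0 by (simp flip: of_real_mult)
    have "f a i / complex_of_real (sqrt r) * cnj (f b i / complex_of_real (sqrt r))
        = f a i * f i b / (complex_of_real (sqrt r) * complex_of_real (sqrt r))"
      using hermD[OF h i b] by simp
    also have "\<dots> = f a i * f i b / f i i" using sq fiireal by simp
    finally show "f a b = f a i / complex_of_real (sqrt r) * cnj (f b i / complex_of_real (sqrt r)) + g a b"
      unfolding g_def by simp
  qed
  show "\<forall>x. 0 \<le> Re (qf n g x)"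
  proof
    fix x
    define \<beta> where "\<beta> = (\<Sum>b<n. f i b * x b)"
    define s where "s = - \<beta> / f i i"
    have c1: "(\<Sum>a<n. cnj (x a) * f a i) = cnj \<beta>"
    proof -
      have "(\<Sum>a<n. cnj (x a) * f a i) = (\<Sum>a<n. cnj (f i a * x a))"
      proof (rule sum.cong[OF refl])
        fix a assume "a \<in> {..<n}"
        then have "f a i = cnj (f i a)" using hermD[OF h i, of a] by auto
        then show "cnj (x a) * f a i = cnj (f i a * x a)" by (simp add: mult.commute)
      qed
      then show ?thesis unfolding \<beta>_def by (simp only: cnj_sum)
    qed
    have "qf n g x = qf n f x - qf n (\<lambda>a b. f a i * f i b / f i i) x"
      unfolding g_def by (rule qf_diff)
    also have "qf n (\<lambda>a b. f a i * f i b / f i i) x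
        = (\<Sum>a<n. cnj (x a) * f a i) * (\<Sum>b<n. f i b * x b) / f i i"
      by (rule qf_outer)
    finally have qg: "qf n g x = qf n f x - cnj \<beta> * \<beta> / f i i" using c1 \<beta>_def by simp
    have "qf n f (\<lambda>a. x a + s * dl i a) = qf n f x + bf n f x (\<lambda>a. s * dl i a)
       + bf n f (\<lambda>a. s * dl i a) x + qf n f (\<lambda>a. s * dl i a)"
      by (rule qf_add)
    also have "\<dots> = qf n f x + s * cnj \<beta> + cnj s * \<beta> + cnj s * (s * f i i)"
    proof -
      have 1: "bf n f x (\<lambda>a. s * dl i a) = s * cnj \<beta>"
        by (simp only: bf_scale_right bf_dl_right[OF i] c1)
      have 2: "bf n f (\<lambda>a. s * dl i a) x = cnj s * \<beta>"
        by (simp only: bf_scale_left bf_dl_left[OF i] \<beta>_def)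
      have 3: "qf n f (\<lambda>a. s * dl i a) = cnj s * (s * f i i)"
        by (simp only: qf_bf bf_scale_left bf_scale_right bf_dl_dl[OF i i])
      show ?thesis by (simp only: 1 2 3)
    qed
    also have "\<dots> = qf n f x - cnj \<beta> * \<beta> / f i i"
    proof -
      have rn: "complex_of_real r \<noteq> 0" using rpos by simp
      show ?thesis unfolding s_def fiireal using rn by (simp add: field_simps)
    qed
    finally have "qf n g x = qf n f (\<lambda>a. x a + s * dl i a)" using qg by simp
    then show "0 \<le> Re (qf n g x)" using pos by simp
  qed
qed

lemma decomp_aux:
  "card {j. j < n \<and> f j j \<noteq> 0} = m \<Longrightarrow> herm n f \<Longrightarrow> \<forall>x. 0 \<le> Re (qf n f x) \<Longrightarrow> gramF n f"
proof (induct m arbitrary: f rule: less_induct)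
  case (less m f)
  show ?case
  proof (cases "\<exists>i<n. f i i \<noteq> 0")
    case False
    then have "\<forall>a<n. \<forall>b<n. f a b = 0" using zero_row[OF less(3) less(4)] by blast
    then show ?thesis unfolding gramF_def by (intro exI[of _ "[]"]) simp
  next
    case True
    then obtain i where i: "i < n" and nz: "f i i \<noteq> 0" by blast
    define g where "g = (\<lambda>a b. f a b - f a i * f i b / f i i)"
    note P = peel[OF less(3) less(4) i nz g_def]
    have sub: "{j. j < n \<and> g j j \<noteq> 0} \<subset> {j. j < n \<and> f j j \<noteq> 0}"
    proof -
      have "{j. j < n \<and> g j j \<noteq> 0} \<subseteq> {j. j < n \<and> f j j \<noteq> 0}"
        using P(4) by blast
      moreover have "i \<in> {j. j < n \<and> f j j \<noteq> 0}" "i \<notin> {j. j < n \<and> g j j \<noteq> 0}"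
        using i nz P(3) by auto
      ultimately show ?thesis by blast
    qed
    have "card {j. j < n \<and> g j j \<noteq> 0} < m"
      using psubset_card_mono[OF _ sub] less(2) by simp
    then have "gramF n g" using less(1)[OF _ refl P(1) P(2)] by blast
    then obtain us where us: "\<forall>a<n. \<forall>b<n. g a b = (\<Sum>u\<leftarrow>us. u a * cnj (u b))"
      unfolding gramF_def by blast
    obtain v where v: "\<forall>a<n. \<forall>b<n. f a b = v a * cnj (v b) + g a b" using P(5) by blast
    show ?thesis unfolding gramF_def
    proof (intro exI[of _ "v # us"] allI impI)
      fix a b assume "a < n" "b < n"
      then show "f a b = (\<Sum>u\<leftarrow>v # us. u a * cnj (u b))" using v us by simp
    qed
  qed
qed

lemma decomp: "herm n f \<Longrightarrow> \<forall>x. 0 \<le> Re (qf n f x) \<Longrightarrow> gramF n f"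
  using decomp_aux by blast



definition ent :: "complex mat \<Rightarrow> nat \<Rightarrow> nat \<Rightarrow> complex" where "ent A a b = A $$ (a,b)"
definition gramM :: "nat \<Rightarrow> complex mat \<Rightarrow> bool" where
  "gramM n A \<longleftrightarrow> A \<in> carrier_mat n n \<and> gramF n (ent A)"
definition trp :: "nat \<Rightarrow> (nat\<Rightarrow>nat\<Rightarrow>complex) \<Rightarrow> (nat\<Rightarrow>nat\<Rightarrow>complex) \<Rightarrow> complex" where
  "trp n F X = (\<Sum>a<n. \<Sum>b<n. F a b * X b a)"
definition gm :: "nat \<Rightarrow> (nat \<Rightarrow> complex) \<Rightarrow> (nat \<Rightarrow> complex) \<Rightarrow> complex" where
  "gm n u x = (\<Sum>b<n. cnj (u b) * x b)"

lemma sl_cmult: fixes c :: complex shows "(\<Sum>u\<leftarrow>us. c * F u) = c * (\<Sum>u\<leftarrow>us. F u)"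
  by (induct us) (auto simp: distrib_left)
lemma sl_multc: fixes c :: complex shows "(\<Sum>u\<leftarrow>us. F u * c) = (\<Sum>u\<leftarrow>us. F u) * c"
  by (induct us) (auto simp: distrib_right)
lemma sl_swap: "(\<Sum>a\<in>A. \<Sum>u\<leftarrow>us. F a u) = (\<Sum>u\<leftarrow>us. \<Sum>a\<in>A. F a u)"
  by (induct us) (auto simp: sum.distrib)
lemma sl_cnj: "cnj (\<Sum>u\<leftarrow>us. F u) = (\<Sum>u\<leftarrow>us. cnj (F u))"
  by (induct us) auto
lemma sl_Re_nonneg: "(\<And>u. 0 \<le> Re (F u)) \<Longrightarrow> 0 \<le> Re (\<Sum>u\<leftarrow>us. F u)"
  by (induct us) (auto intro: add_nonneg_nonneg)
lemma sl_Im_zero: "(\<And>u. Im (F u) = 0) \<Longrightarrow> Im (\<Sum>u\<leftarrow>us. F u) = 0"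
  by (induct us) auto

lemma cnj_mult_self: "0 \<le> Re (cnj z * z)" "Im (cnj z * z) = 0"
  by (auto simp: algebra_simps)

lemma qf_rep:
  assumes rep: "\<forall>a<n. \<forall>b<n. f a b = (\<Sum>u\<leftarrow>us. u a * cnj (u b))"
  shows "qf n f x = (\<Sum>u\<leftarrow>us. cnj (gm n u x) * gm n u x)"
proof -
  have "qf n f x = (\<Sum>a<n. \<Sum>b<n. \<Sum>u\<leftarrow>us. (cnj (x a) * u a) * (cnj (u b) * x b))"
    unfolding qf_def
  proof (rule sum.cong[OF refl], rule sum.cong[OF refl])
    fix a b assume "a \<in> {..<n}" "b \<in> {..<n}"
    then have "f a b = (\<Sum>u\<leftarrow>us. u a * cnj (u b))" using rep by auto
    then show "cnj (x a) * f a b * x b = (\<Sum>u\<leftarrow>us. (cnj (x a) * u a) * (cnj (u b) * x b))"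
      by (simp add: sl_cmult[symmetric] sl_multc[symmetric] mult_ac)
  qed
  also have "\<dots> = (\<Sum>u\<leftarrow>us. \<Sum>a<n. \<Sum>b<n. (cnj (x a) * u a) * (cnj (u b) * x b))"
    by (simp add: sl_swap)
  also have "\<dots> = (\<Sum>u\<leftarrow>us. cnj (gm n u x) * gm n u x)"
  proof -
    have "\<And>u. (\<Sum>a<n. \<Sum>b<n. (cnj (x a) * u a) * (cnj (u b) * x b)) = cnj (gm n u x) * gm n u x"
    proof -
      fix u
      have "cnj (gm n u x) = (\<Sum>a<n. cnj (x a) * u a)" by (simp add: gm_def mult.commute)
      then show "(\<Sum>a<n. \<Sum>b<n. (cnj (x a) * u a) * (cnj (u b) * x b)) = cnj (gm n u x) * gm n u x"
        by (simp add: sum_product gm_def)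
    qed
    then show ?thesis by simp
  qed
  finally show ?thesis .
qed

lemma rep_herm:
  assumes rep: "\<forall>a<n. \<forall>b<n. f a b = (\<Sum>u\<leftarrow>us. u a * cnj (u b))"
  shows "herm n f"
  unfolding herm_def
proof (intro allI impI)
  fix a b assume a: "a < n" and b: "b < n"
  have "f b a = (\<Sum>u\<leftarrow>us. u b * cnj (u a))" using rep a b by auto
  also have "\<dots> = cnj (\<Sum>u\<leftarrow>us. u a * cnj (u b))" by (simp add: sl_cnj mult.commute)
  also have "\<dots> = cnj (f a b)" using rep a b by auto
  finally show "f b a = cnj (f a b)" .
qed

lemma gramF_herm: "gramF n f \<Longrightarrow> herm n f"
  unfolding gramF_def using rep_herm by blast

lemma gramF_qf: assumes "gramF n f" shows "0 \<le> Re (qf n f x)" "Im (qf n f x) = 0"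
proof -
  obtain us where rep: "\<forall>a<n. \<forall>b<n. f a b = (\<Sum>u\<leftarrow>us. u a * cnj (u b))"
    using assms unfolding gramF_def by blast
  show "0 \<le> Re (qf n f x)" unfolding qf_rep[OF rep] by (rule sl_Re_nonneg) (rule cnj_mult_self)
  show "Im (qf n f x) = 0" unfolding qf_rep[OF rep] by (rule sl_Im_zero) (rule cnj_mult_self)
qed

lemma adj_index: "i < dim_col A \<Longrightarrow> j < dim_row A \<Longrightarrow> mat_adjoint A $$ (i,j) = conjugate (A $$ (j,i))"
  unfolding mat_adjoint_def by (simp add: mat_of_rows_def)

lemma adj_dim: "dim_row (mat_adjoint A) = dim_col A" "dim_col (mat_adjoint A) = dim_row A"
  unfolding mat_adjoint_def by (simp_all add: mat_of_rows_def)

lemma adj_herm: assumes A: "A \<in> carrier_mat n n" shows "mat_adjoint A = A \<longleftrightarrow> herm n (ent A)"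
proof
  assume h: "mat_adjoint A = A"
  show "herm n (ent A)" unfolding herm_def ent_def
  proof (intro allI impI)
    fix a b assume a: "a < n" and b: "b < n"
    have "A $$ (b,a) = mat_adjoint A $$ (b,a)" using h by simp
    also have "\<dots> = cnj (A $$ (a,b))" using adj_index[of b A a] a b A by auto
    finally show "A $$ (b, a) = cnj (A $$ (a, b))" .
  qed
next
  assume h: "herm n (ent A)"
  show "mat_adjoint A = A"
  proof (rule eq_matI)
    fix i j assume i: "i < dim_row A" and j: "j < dim_col A"
    have "mat_adjoint A $$ (i, j) = cnj (A $$ (j,i))" using adj_index[of i A j] i j A by auto
    also have "\<dots> = A $$ (i,j)" using hermD[OF h, of j i] i j A unfolding ent_def by auto
    finally show "mat_adjoint A $$ (i, j) = A $$ (i, j)" .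
  qed (use A in \<open>auto simp: adj_dim\<close>)
qed

lemma quad_eq: assumes A: "A \<in> carrier_mat n n" and v: "v \<in> carrier_vec n"
  shows "(A *\<^sub>v v) \<bullet>c v = qf n (ent A) (\<lambda>a. v $ a)"
proof -
  have "(A *\<^sub>v v) \<bullet>c v = (\<Sum>a<n. (\<Sum>b<n. A $$ (a,b) * v $ b) * cnj (v $ a))"
    using A v by (simp add: scalar_prod_def mult_mat_vec_def atLeast0LessThan row_def)
  also have "\<dots> = qf n (ent A) (\<lambda>a. v $ a)"
    unfolding qf_def ent_def by (simp add: sum_distrib_right sum_distrib_left mult_ac)
  finally show ?thesis .
qed

lemma qf_cong: "(\<And>a. a < n \<Longrightarrow> x a = y a) \<Longrightarrow> qf n f x = qf n f y"
  unfolding qf_def by (intro sum.cong refl) auto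

lemma psd_iff: "psd n A \<longleftrightarrow> A \<in> carrier_mat n n \<and> herm n (ent A) \<and> (\<forall>x. 0 \<le> Re (qf n (ent A) x))"
proof
  assume p: "psd n A"
  then have A: "A \<in> carrier_mat n n" and adj: "mat_adjoint A = A"
    and pos: "\<forall>v \<in> carrier_vec n. Im ((A *\<^sub>v v) \<bullet>c v) = 0 \<and> Re ((A *\<^sub>v v) \<bullet>c v) \<ge> 0"
    unfolding psd_def by auto
  have "\<forall>x. 0 \<le> Re (qf n (ent A) x)"
  proof
    fix x
    have "qf n (ent A) x = qf n (ent A) (\<lambda>a. vec n x $ a)" by (rule qf_cong) simp
    also have "\<dots> = (A *\<^sub>v vec n x) \<bullet>c vec n x" using quad_eq[OF A, of "vec n x"] by simp
    finally show "0 \<le> Re (qf n (ent A) x)" using pos by auto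
  qed
  then show "A \<in> carrier_mat n n \<and> herm n (ent A) \<and> (\<forall>x. 0 \<le> Re (qf n (ent A) x))"
    using A adj adj_herm[OF A] by auto
next
  assume h: "A \<in> carrier_mat n n \<and> herm n (ent A) \<and> (\<forall>x. 0 \<le> Re (qf n (ent A) x))"
  then have A: "A \<in> carrier_mat n n" by auto
  show "psd n A" unfolding psd_def
    using h adj_herm[OF A] quad_eq[OF A] qf_real[of n "ent A"] by auto
qed

lemma gramM_psd: "gramM n A \<longleftrightarrow> psd n A"
  unfolding gramM_def psd_iff using decomp gramF_herm gramF_qf by blast

lemma mtrace_mult: assumes "A \<in> carrier_mat n n" "B \<in> carrier_mat n n"
  shows "mtrace (A * B) = trp n (ent A) (ent B)"
  using assms unfolding mtrace_def trp_def ent_def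
  by (auto intro!: sum.cong simp: scalar_prod_def atLeast0LessThan row_def col_def)

lemma trp_rep:
  assumes rep: "\<forall>a<n. \<forall>b<n. f a b = (\<Sum>u\<leftarrow>us. u a * cnj (u b))"
  shows "trp n f X = (\<Sum>u\<leftarrow>us. qf n X u)"
proof -
  have "trp n f X = (\<Sum>a<n. \<Sum>b<n. \<Sum>u\<leftarrow>us. cnj (u b) * X b a * u a)"
    unfolding trp_def
  proof (rule sum.cong[OF refl], rule sum.cong[OF refl])
    fix a b assume "a \<in> {..<n}" "b \<in> {..<n}"
    then have "f a b = (\<Sum>u\<leftarrow>us. u a * cnj (u b))" using rep by auto
    then show "f a b * X b a = (\<Sum>u\<leftarrow>us. cnj (u b) * X b a * u a)"
      by (simp add: sl_multc[symmetric] sl_cmult[symmetric] mult_ac)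
  qed
  also have "\<dots> = (\<Sum>u\<leftarrow>us. \<Sum>a<n. \<Sum>b<n. cnj (u b) * X b a * u a)"
    by (simp add: sl_swap)
  also have "\<dots> = (\<Sum>u\<leftarrow>us. qf n X u)"
    unfolding qf_def by (subst sum.swap) (rule refl)
  finally show ?thesis .
qed

lemma trp_gram: assumes "gramF n f" "gramF n X"
  shows "0 \<le> Re (trp n f X)" "Im (trp n f X) = 0"
proof -
  obtain us where rep: "\<forall>a<n. \<forall>b<n. f a b = (\<Sum>u\<leftarrow>us. u a * cnj (u b))"
    using assms unfolding gramF_def by blast
  show "0 \<le> Re (trp n f X)" unfolding trp_rep[OF rep]
    by (rule sl_Re_nonneg) (rule gramF_qf(1)[OF assms(2)])
  show "Im (trp n f X) = 0" unfolding trp_rep[OF rep]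
    by (rule sl_Im_zero) (rule gramF_qf(2)[OF assms(2)])
qed



lemma sum_lessThan_add_nat: fixes m k :: nat and g :: "nat \<Rightarrow> 'a::comm_monoid_add" shows "(\<Sum>i<m+k. g i) = (\<Sum>i<m. g i) + (\<Sum>b<k. g (m+b))"
  by (induct k) (auto simp: add.assoc)

lemma sum_divmod: fixes n1 n2 :: nat and f :: "nat \<Rightarrow> nat \<Rightarrow> 'a::comm_monoid_add" shows "(\<Sum>i<n1*n2. f (i div n2) (i mod n2)) = (\<Sum>a<n1. \<Sum>b<n2. f a b)"
proof (induct n1)
  case 0 then show ?case by simp
next
  case (Suc n1)
  have "(\<Sum>i<Suc n1*n2. f (i div n2) (i mod n2)) = (\<Sum>i<n1*n2 + n2. f (i div n2) (i mod n2))"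
    by (simp add: add.commute)
  also have "\<dots> = (\<Sum>i<n1*n2. f (i div n2) (i mod n2)) + (\<Sum>b<n2. f ((n1*n2+b) div n2) ((n1*n2+b) mod n2))"
    by (rule sum_lessThan_add_nat)
  also have "(\<Sum>b<n2. f ((n1*n2+b) div n2) ((n1*n2+b) mod n2)) = (\<Sum>b<n2. f n1 b)"
    by (intro sum.cong refl) auto
  finally show ?case using Suc by simp
qed

lemma divmod_bounds: fixes a n1 n2 :: nat assumes "a < n1 * n2" shows "a div n2 < n1" "a mod n2 < n2"
proof -
  show "a div n2 < n1" using assms by (rule less_mult_imp_div_less)
  have "n2 > 0" using assms by (cases n2) auto
  then show "a mod n2 < n2" by simp
qed

lemma divmod_eq: "(a::nat) = b \<longleftrightarrow> a div n = b div n \<and> a mod n = b mod n"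
  by (metis div_mult_mod_eq)

lemma kron_carrier: "A \<in> carrier_mat n1 n1 \<Longrightarrow> B \<in> carrier_mat n2 n2 \<Longrightarrow> kron A B \<in> carrier_mat (n1*n2) (n1*n2)"
  unfolding kron_def by auto

lemma kron_ent: assumes "A \<in> carrier_mat n1 n1" "B \<in> carrier_mat n2 n2" "a < n1*n2" "b < n1*n2"
  shows "ent (kron A B) a b = ent A (a div n2) (b div n2) * ent B (a mod n2) (b mod n2)"
  using assms unfolding kron_def ent_def by auto

lemma sl_concat: "(\<Sum>v\<leftarrow>concat (map (\<lambda>u. map (h u) ws) us). F v) = (\<Sum>u\<leftarrow>us. \<Sum>w\<leftarrow>ws. F (h u w))"
  by (induct us) (auto simp: comp_def)

lemma gramF_cong: "gramF n f \<Longrightarrow> (\<And>a b. a < n \<Longrightarrow> b < n \<Longrightarrow> g a b = f a b) \<Longrightarrow> gramF n g"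
  unfolding gramF_def by metis

lemma gramF_zero: "gramF n (\<lambda>a b. 0)"
  unfolding gramF_def by (intro exI[of _ "[]"]) simp

lemma gramF_add: assumes "gramF n f" "gramF n g" shows "gramF n (\<lambda>a b. f a b + g a b)"
proof -
  obtain us where us: "\<forall>a<n. \<forall>b<n. f a b = (\<Sum>u\<leftarrow>us. u a * cnj (u b))"
    using assms unfolding gramF_def by blast
  obtain ws where ws: "\<forall>a<n. \<forall>b<n. g a b = (\<Sum>u\<leftarrow>ws. u a * cnj (u b))"
    using assms unfolding gramF_def by blast
  show ?thesis unfolding gramF_def
    by (intro exI[of _ "us @ ws"]) (simp add: us ws)
qed

lemma gramF_kron: assumes "gramF n1 f" "gramF n2 g"
  shows "gramF (n1*n2) (\<lambda>a b. f (a div n2) (b div n2) * g (a mod n2) (b mod n2))"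
proof -
  obtain us where us: "\<forall>a<n1. \<forall>b<n1. f a b = (\<Sum>u\<leftarrow>us. u a * cnj (u b))"
    using assms unfolding gramF_def by blast
  obtain ws where ws: "\<forall>a<n2. \<forall>b<n2. g a b = (\<Sum>u\<leftarrow>ws. u a * cnj (u b))"
    using assms unfolding gramF_def by blast
  let ?h = "\<lambda>u w i. u (i div n2) * w (i mod n2)"
  show ?thesis unfolding gramF_def
  proof (intro exI[of _ "concat (map (\<lambda>u. map (?h u) ws) us)"] allI impI)
    fix a b assume a: "a < n1*n2" and b: "b < n1*n2"
    note ba = divmod_bounds[OF a] and bb = divmod_bounds[OF b]
    have "f (a div n2) (b div n2) * g (a mod n2) (b mod n2)
       = (\<Sum>u\<leftarrow>us. u (a div n2) * cnj (u (b div n2))) * (\<Sum>w\<leftarrow>ws. w (a mod n2) * cnj (w (b mod n2)))"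
      using us ws ba bb by simp
    also have "\<dots> = (\<Sum>u\<leftarrow>us. \<Sum>w\<leftarrow>ws. ?h u w a * cnj (?h u w b))"
      by (subst sl_multc[symmetric]) (simp add: sl_cmult[symmetric] mult_ac)
    finally show "f (a div n2) (b div n2) * g (a mod n2) (b mod n2) =
      (\<Sum>v\<leftarrow>concat (map (\<lambda>u. map (?h u) ws) us). v a * cnj (v b))"
      by (simp only: sl_concat)
  qed
qed

lemma gramM_kron: assumes "gramM n1 A" "gramM n2 B" shows "gramM (n1*n2) (kron A B)"
proof -
  have A: "A \<in> carrier_mat n1 n1" and B: "B \<in> carrier_mat n2 n2" using assms gramM_def by auto
  show ?thesis unfolding gramM_def
    using kron_carrier[OF A B] gramF_cong[OF gramF_kron[of n1 "ent A" n2 "ent B"]] kron_ent[OF A B]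
      assms gramM_def by auto
qed

lemma gramM_minus_kron:
  assumes G: "gramM n1 G" and H: "gramM n2 H" and W: "gramM n1 W" and V: "gramM n2 V"
    and GW: "gramM n1 (G - W)" and HV: "gramM n2 (H - V)"
  shows "gramM (n1*n2) (kron G H - kron W V)"
proof -
  have Gc: "G \<in> carrier_mat n1 n1" and Hc: "H \<in> carrier_mat n2 n2" and Wc: "W \<in> carrier_mat n1 n1"
    and Vc: "V \<in> carrier_mat n2 n2" using assms gramM_def by auto
  have g1: "gramF (n1*n2) (\<lambda>a b. ent (G - W) (a div n2) (b div n2) * ent H (a mod n2) (b mod n2))"
    using gramF_kron GW H unfolding gramM_def by blast
  have g2: "gramF (n1*n2) (\<lambda>a b. ent W (a div n2) (b div n2) * ent (H - V) (a mod n2) (b mod n2))"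
    using gramF_kron W HV unfolding gramM_def by blast
  have "gramF (n1*n2) (ent (kron G H - kron W V))"
  proof (rule gramF_cong[OF gramF_add[OF g1 g2]])
    fix a b assume a: "a < n1*n2" and b: "b < n1*n2"
    note ba = divmod_bounds[OF a] and bb = divmod_bounds[OF b]
    have "ent (kron G H - kron W V) a b = ent (kron G H) a b - ent (kron W V) a b"
      using kron_carrier[OF Wc Vc] a b unfolding ent_def by simp
    also have "\<dots> = ent G (a div n2) (b div n2) * ent H (a mod n2) (b mod n2)
       - ent W (a div n2) (b div n2) * ent V (a mod n2) (b mod n2)"
      using kron_ent[OF Gc Hc a b] kron_ent[OF Wc Vc a b] by simp
    also have "\<dots> = ent (G - W) (a div n2) (b div n2) * ent H (a mod n2) (b mod n2)
       + ent W (a div n2) (b div n2) * ent (H - V) (a mod n2) (b mod n2)"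
      using ba bb Wc Vc unfolding ent_def by (simp add: algebra_simps)
    finally show "ent (kron G H - kron W V) a b = ent (G - W) (a div n2) (b div n2) * ent H (a mod n2) (b mod n2)
       + ent W (a div n2) (b div n2) * ent (H - V) (a mod n2) (b mod n2)" .
  qed
  moreover have "kron G H - kron W V \<in> carrier_mat (n1*n2) (n1*n2)"
    using kron_carrier[OF Gc Hc] kron_carrier[OF Wc Vc] by auto
  ultimately show ?thesis unfolding gramM_def by simp
qed

lemma trp_kron:
  assumes A: "A \<in> carrier_mat n1 n1" and B: "B \<in> carrier_mat n2 n2"
    and C: "C \<in> carrier_mat n1 n1" and D: "D \<in> carrier_mat n2 n2"
  shows "mtrace (kron A B * kron C D) = mtrace (A * C) * mtrace (B * D)"
proof -
  let ?a = "ent A" and ?b = "ent B" and ?c = "ent C" and ?d = "ent D"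
  have "mtrace (kron A B * kron C D) = trp (n1*n2) (ent (kron A B)) (ent (kron C D))"
    by (rule mtrace_mult[OF kron_carrier[OF A B] kron_carrier[OF C D]])
  also have "\<dots> = (\<Sum>i<n1*n2. \<Sum>j<n1*n2. (?a (i div n2) (j div n2) * ?b (i mod n2) (j mod n2))
       * (?c (j div n2) (i div n2) * ?d (j mod n2) (i mod n2)))"
    unfolding trp_def using kron_ent[OF A B] kron_ent[OF C D] by (intro sum.cong refl) auto
  also have "\<dots> = (\<Sum>a1<n1. \<Sum>a2<n2. \<Sum>b1<n1. \<Sum>b2<n2. (?a a1 b1 * ?b a2 b2) * (?c b1 a1 * ?d b2 a2))"
  proof -
    define X where "X = (\<lambda>i b1 b2. (?a (i div n2) b1 * ?b (i mod n2) b2) * (?c b1 (i div n2) * ?d b2 (i mod n2)))"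
    have "\<And>i. (\<Sum>j<n1*n2. X i (j div n2) (j mod n2)) = (\<Sum>b1<n1. \<Sum>b2<n2. X i b1 b2)"
      by (rule sum_divmod)
    then have "(\<Sum>i<n1*n2. \<Sum>j<n1*n2. (?a (i div n2) (j div n2) * ?b (i mod n2) (j mod n2))
       * (?c (j div n2) (i div n2) * ?d (j mod n2) (i mod n2)))
       = (\<Sum>i<n1*n2. (\<lambda>a1 a2. \<Sum>b1<n1. \<Sum>b2<n2. (?a a1 b1 * ?b a2 b2) * (?c b1 a1 * ?d b2 a2)) (i div n2) (i mod n2))"
      unfolding X_def by simp
    also have "\<dots> = (\<Sum>a1<n1. \<Sum>a2<n2. (\<lambda>a1 a2. \<Sum>b1<n1. \<Sum>b2<n2. (?a a1 b1 * ?b a2 b2) * (?c b1 a1 * ?d b2 a2)) a1 a2)"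
      by (rule sum_divmod)
    finally show ?thesis by simp
  qed
  also have "\<dots> = (\<Sum>a1<n1. \<Sum>b1<n1. \<Sum>a2<n2. \<Sum>b2<n2. (?a a1 b1 * ?c b1 a1) * (?b a2 b2 * ?d b2 a2))"
    apply (rule sum.cong[OF refl])
    apply (rule trans[OF sum.swap])
    apply (simp add: mult_ac)
    done
  also have "\<dots> = trp n1 ?a ?c * trp n2 ?b ?d"
    unfolding trp_def sum_distrib_right by (simp add: sum_distrib_left)
  also have "\<dots> = mtrace (A * C) * mtrace (B * D)"
    using mtrace_mult[OF A C] mtrace_mult[OF B D] by simp
  finally show ?thesis .
qed

lemma mtrace_kron:
  assumes A: "A \<in> carrier_mat n1 n1" and B: "B \<in> carrier_mat n2 n2"
  shows "mtrace (kron A B) = mtrace A * mtrace B"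
proof -
  have "mtrace (kron A B) = (\<Sum>i<n1*n2. ent A (i div n2) (i div n2) * ent B (i mod n2) (i mod n2))"
    unfolding mtrace_def using kron_carrier[OF A B] kron_ent[OF A B] by (intro sum.cong) (auto simp: ent_def)
  also have "\<dots> = (\<Sum>a<n1. \<Sum>b<n2. ent A a a * ent B b b)" by (rule sum_divmod)
  also have "\<dots> = mtrace A * mtrace B"
    using A B unfolding mtrace_def ent_def by (simp add: sum_product)
  finally show ?thesis .
qed

lemma gramM_trace_real: assumes "gramM n A" shows "Im (mtrace A) = 0"
proof -
  obtain us where us: "\<forall>a<n. \<forall>b<n. ent A a b = (\<Sum>u\<leftarrow>us. u a * cnj (u b))"
    using assms unfolding gramM_def gramF_def by blast
  have "mtrace A = (\<Sum>a<n. \<Sum>u\<leftarrow>us. cnj (u a) * u a)"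
    using assms us unfolding mtrace_def gramM_def ent_def by (auto intro!: sum.cong simp: mult.commute)
  also have "Im \<dots> = 0" by (simp add: sl_Im_zero cnj_mult_self)
  finally show ?thesis .
qed

lemma one_kron: "kron (1\<^sub>m n1) (1\<^sub>m n2) = 1\<^sub>m (n1*n2)"
proof (rule eq_matI)
  fix i j assume "i < dim_row (1\<^sub>m (n1*n2))" "j < dim_col (1\<^sub>m (n1*n2))"
  then have i: "i < n1*n2" and j: "j < n1*n2" by auto
  note bi = divmod_bounds[OF i] and bj = divmod_bounds[OF j]
  show "kron (1\<^sub>m n1) (1\<^sub>m n2) $$ (i, j) = 1\<^sub>m (n1 * n2) $$ (i, j)"
    using i j bi bj divmod_eq[of i j n2] unfolding kron_def by auto
qed (auto simp: kron_def)



definition cert :: "nat \<Rightarrow> 'i set \<Rightarrow> ('i \<Rightarrow> complex mat) \<Rightarrow> ('i \<Rightarrow> complex mat) \<Rightarrow> complex mat \<Rightarrow> bool" where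
  "cert n I W P G \<longleftrightarrow> povm n I P \<and> gramM n G \<and> (\<forall>i\<in>I. gramM n (W i) \<and> gramM n (G - W i))
     \<and> Re (mtrace G) = (\<Sum>i\<in>I. Re (mtrace (P i * W i)))"

lemma trp_sum_left: "(\<Sum>i\<in>I. trp n (F i) X) = trp n (\<lambda>a b. \<Sum>i\<in>I. F i a b) X"
  unfolding trp_def by (simp add: sum_distrib_right sum.swap[of _ I])

lemma trp_minus_right: "trp n F (\<lambda>a b. X a b - Y a b) = trp n F X - trp n F Y"
  unfolding trp_def by (simp add: right_diff_distrib sum_subtractf)

lemma povm_psd: "povm n I Q \<Longrightarrow> i \<in> I \<Longrightarrow> Q i \<in> carrier_mat n n \<and> gramM n (Q i)"
  unfolding povm_def using gramM_psd psd_def by blast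

lemma msum_ent: "a < n \<Longrightarrow> b < n \<Longrightarrow> ent (msum n Q I) a b = (\<Sum>i\<in>I. ent (Q i) a b)"
  unfolding msum_def ent_def by simp

lemma cert_sound:
  assumes c: "cert n I W P G" and Q: "povm n I Q"
  shows "(\<Sum>i\<in>I. Re (mtrace (Q i * W i))) \<le> (\<Sum>i\<in>I. Re (mtrace (P i * W i)))"
proof -
  have G: "G \<in> carrier_mat n n" using c unfolding cert_def gramM_def by auto
  have step: "Re (mtrace (Q i * W i)) \<le> Re (trp n (ent (Q i)) (ent G))" if i: "i \<in> I" for i
  proof -
    have Qi: "Q i \<in> carrier_mat n n" "gramM n (Q i)" using povm_psd[OF Q i] by auto
    have Wi: "gramM n (W i)" "gramM n (G - W i)" using c i unfolding cert_def by auto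
    then have Wc: "W i \<in> carrier_mat n n" unfolding gramM_def by auto
    have "trp n (ent (Q i)) (ent (G - W i)) = trp n (ent (Q i)) (\<lambda>a b. ent G a b - ent (W i) a b)"
      unfolding trp_def using Wc by (intro sum.cong refl) (auto simp: ent_def)
    also have "\<dots> = trp n (ent (Q i)) (ent G) - trp n (ent (Q i)) (ent (W i))"
      by (rule trp_minus_right)
    finally have eq: "trp n (ent (Q i)) (ent (G - W i)) = trp n (ent (Q i)) (ent G) - trp n (ent (Q i)) (ent (W i))" .
    have "0 \<le> Re (trp n (ent (Q i)) (ent (G - W i)))"
      using trp_gram(1) Qi(2) Wi(2) unfolding gramM_def by blast
    then show ?thesis unfolding mtrace_mult[OF Qi(1) Wc] eq by simp
  qed
  have "(\<Sum>i\<in>I. Re (mtrace (Q i * W i))) \<le> (\<Sum>i\<in>I. Re (trp n (ent (Q i)) (ent G)))"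
    by (rule sum_mono) (rule step)
  also have "\<dots> = Re (\<Sum>i\<in>I. trp n (ent (Q i)) (ent G))" by simp
  also have "(\<Sum>i\<in>I. trp n (ent (Q i)) (ent G)) = trp n (\<lambda>a b. \<Sum>i\<in>I. ent (Q i) a b) (ent G)"
    by (rule trp_sum_left)
  also have "\<dots> = trp n (ent (1\<^sub>m n)) (ent G)"
  proof -
    have "msum n Q I = 1\<^sub>m n" using Q unfolding povm_def by auto
    then show ?thesis unfolding trp_def using msum_ent[of _ n _ Q I]
      by (intro sum.cong refl) (metis lessThan_iff)
  qed
  also have "\<dots> = mtrace G"
  proof -
    have "trp n (ent (1\<^sub>m n)) (ent G) = (\<Sum>a<n. \<Sum>b<n. (if a = b then ent G b a else 0))"
      unfolding trp_def ent_def by (intro sum.cong refl) auto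
    also have "\<dots> = (\<Sum>a<n. ent G a a)" by simp
    also have "\<dots> = mtrace G" using G unfolding mtrace_def ent_def by simp
    finally show ?thesis .
  qed
  also have "Re (mtrace G) = (\<Sum>i\<in>I. Re (mtrace (P i * W i)))" using c unfolding cert_def by auto
  finally show ?thesis .
qed

lemma cert_binary:
  assumes c1: "cert n1 I W P G" and c2: "cert n2 J V R H"
  shows "cert (n1*n2) (I \<times> J) (\<lambda>(i,j). kron (W i) (V j)) (\<lambda>(i,j). kron (P i) (R j)) (kron G H)"
proof -
  have p1: "povm n1 I P" and p2: "povm n2 J R" using c1 c2 unfolding cert_def by auto
  have G: "gramM n1 G" and H: "gramM n2 H" using c1 c2 unfolding cert_def by auto
  have Gc: "G \<in> carrier_mat n1 n1" and Hc: "H \<in> carrier_mat n2 n2" using G H gramM_def by auto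
  have W: "\<And>i. i \<in> I \<Longrightarrow> gramM n1 (W i) \<and> gramM n1 (G - W i)" using c1 unfolding cert_def by auto
  have V: "\<And>j. j \<in> J \<Longrightarrow> gramM n2 (V j) \<and> gramM n2 (H - V j)" using c2 unfolding cert_def by auto
  have povm: "povm (n1*n2) (I \<times> J) (\<lambda>(i,j). kron (P i) (R j))"
    unfolding povm_def
  proof (intro conjI ballI)
    show "finite (I \<times> J)" using p1 p2 unfolding povm_def by auto
  next
    fix x assume "x \<in> I \<times> J"
    then obtain i j where x: "x = (i,j)" "i \<in> I" "j \<in> J" by auto
    show "psd (n1*n2) (case x of (i,j) \<Rightarrow> kron (P i) (R j))"
      using x gramM_kron povm_psd[OF p1 x(2)] povm_psd[OF p2 x(3)] gramM_psd by auto
  next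
    have "msum (n1*n2) (\<lambda>(i,j). kron (P i) (R j)) (I \<times> J) = kron (msum n1 P I) (msum n2 R J)"
    proof (rule eq_matI)
      fix a b assume "a < dim_row (kron (msum n1 P I) (msum n2 R J))"
        "b < dim_col (kron (msum n1 P I) (msum n2 R J))"
      then have a: "a < n1*n2" and b: "b < n1*n2" unfolding kron_def msum_def by auto
      note ba = divmod_bounds[OF a] and bb = divmod_bounds[OF b]
      have "msum (n1*n2) (\<lambda>(i,j). kron (P i) (R j)) (I \<times> J) $$ (a,b)
          = (\<Sum>(i,j)\<in>I \<times> J. P i $$ (a div n2, b div n2) * R j $$ (a mod n2, b mod n2))"
      proof -
        have "\<And>i j. i \<in> I \<Longrightarrow> j \<in> J \<Longrightarrow> kron (P i) (R j) $$ (a,b) = P i $$ (a div n2, b div n2) * R j $$ (a mod n2, b mod n2)"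
        proof -
          fix i j assume "i \<in> I" "j \<in> J"
          then have "P i \<in> carrier_mat n1 n1" "R j \<in> carrier_mat n2 n2" using povm_psd[OF p1] povm_psd[OF p2] by auto
          from kron_ent[OF this a b] show "kron (P i) (R j) $$ (a,b) = P i $$ (a div n2, b div n2) * R j $$ (a mod n2, b mod n2)"
            unfolding ent_def .
        qed
        then show ?thesis unfolding msum_def using a b by (auto intro!: sum.cong)
      qed
      also have "\<dots> = (\<Sum>i\<in>I. P i $$ (a div n2, b div n2)) * (\<Sum>j\<in>J. R j $$ (a mod n2, b mod n2))"
        by (simp add: sum_product sum.cartesian_product)
      also have "\<dots> = kron (msum n1 P I) (msum n2 R J) $$ (a,b)"
        unfolding kron_def msum_def using a b ba bb by simp
      finally show "msum (n1*n2) (\<lambda>(i,j). kron (P i) (R j)) (I \<times> J) $$ (a,b) = kron (msum n1 P I) (msum n2 R J) $$ (a,b)" .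
    qed (auto simp: kron_def msum_def)
    also have "\<dots> = 1\<^sub>m (n1*n2)" using p1 p2 one_kron unfolding povm_def by auto
    finally show "msum (n1*n2) (\<lambda>(i,j). kron (P i) (R j)) (I \<times> J) = 1\<^sub>m (n1*n2)" .
  qed
  have ws: "\<forall>x\<in>I \<times> J. gramM (n1*n2) ((\<lambda>(i,j). kron (W i) (V j)) x) \<and> gramM (n1*n2) (kron G H - (\<lambda>(i,j). kron (W i) (V j)) x)"
    using W V gramM_kron gramM_minus_kron[OF G H] by auto
  have tr: "Re (mtrace (kron G H)) = (\<Sum>x\<in>I \<times> J. Re (mtrace ((\<lambda>(i,j). kron (P i) (R j)) x * (\<lambda>(i,j). kron (W i) (V j)) x)))"
  proof -
    have "Re (mtrace (kron G H)) = Re (mtrace G) * Re (mtrace H)"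
      using mtrace_kron[OF Gc Hc] gramM_trace_real[OF G] by simp
    also have "\<dots> = (\<Sum>i\<in>I. Re (mtrace (P i * W i))) * (\<Sum>j\<in>J. Re (mtrace (R j * V j)))"
      using c1 c2 unfolding cert_def by simp
    also have "\<dots> = (\<Sum>(i,j)\<in>I \<times> J. Re (mtrace (P i * W i)) * Re (mtrace (R j * V j)))"
      by (simp add: sum_product sum.cartesian_product)
    also have "\<dots> = (\<Sum>(i,j)\<in>I \<times> J. Re (mtrace (kron (P i) (R j) * kron (W i) (V j))))"
    proof (rule sum.cong[OF refl], clarify)
      fix i j assume i: "i \<in> I" and j: "j \<in> J"
      have Pi: "P i \<in> carrier_mat n1 n1" "gramM n1 (P i)" using povm_psd[OF p1 i] by auto
      have Rj: "R j \<in> carrier_mat n2 n2" "gramM n2 (R j)" using povm_psd[OF p2 j] by auto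
      have Wi: "W i \<in> carrier_mat n1 n1" "gramM n1 (W i)" using W[OF i] gramM_def by auto
      have Vj: "V j \<in> carrier_mat n2 n2" "gramM n2 (V j)" using V[OF j] gramM_def by auto
      have im: "Im (mtrace (P i * W i)) = 0"
        using mtrace_mult[OF Pi(1) Wi(1)] trp_gram(2) Pi(2) Wi(2) unfolding gramM_def by metis
      show "Re (mtrace (P i * W i)) * Re (mtrace (R j * V j)) = Re (mtrace (kron (P i) (R j) * kron (W i) (V j)))"
        unfolding trp_kron[OF Pi(1) Rj(1) Wi(1) Vj(1)] using im by simp
    qed
    finally show ?thesis by (simp add: case_prod_unfold)
  qed
  show ?thesis unfolding cert_def using povm gramM_kron[OF G H] ws tr by blast
qed

lemma cert_reindex:
  assumes inj: "inj_on h S" and c: "cert n S W' P' G"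
    and eW: "\<And>s. s \<in> S \<Longrightarrow> W' s = W (h s)" and eP: "\<And>s. s \<in> S \<Longrightarrow> P' s = P (h s)"
  shows "cert n (h ` S) W P G"
proof -
  have p: "povm n S P'" using c unfolding cert_def by auto
  have povm: "povm n (h ` S) P" unfolding povm_def
  proof (intro conjI ballI)
    show "finite (h ` S)" using p unfolding povm_def by auto
  next
    fix x assume "x \<in> h ` S"
    then obtain s where "s \<in> S" "x = h s" by auto
    then show "psd n (P x)" using p eP unfolding povm_def by auto
  next
    have "msum n P (h ` S) = msum n P' S"
      unfolding msum_def using sum.reindex[OF inj] eP by (intro eq_matI) auto
    then show "msum n P (h ` S) = 1\<^sub>m n" using p unfolding povm_def by simp
  qed
  have "(\<Sum>x\<in>h ` S. Re (mtrace (P x * W x))) = (\<Sum>s\<in>S. Re (mtrace (P' s * W' s)))"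
    using sum.reindex[OF inj] eP eW by simp
  then show ?thesis using c povm eW unfolding cert_def by auto
qed

lemma tuples_Suc: "tuples (Suc N) k = (\<lambda>(i,t). i # t) ` ({..<k 0} \<times> tuples N (\<lambda>m. k (Suc m)))"
proof
  show "tuples (Suc N) k \<subseteq> (\<lambda>(i,t). i # t) ` ({..<k 0} \<times> tuples N (\<lambda>m. k (Suc m)))"
  proof
    fix t assume t: "t \<in> tuples (Suc N) k"
    then obtain i t' where tt: "t = i # t'" unfolding tuples_def by (cases t) auto
    have "i < k 0" using t tt unfolding tuples_def by auto
    moreover have "t' \<in> tuples N (\<lambda>m. k (Suc m))" using t tt unfolding tuples_def by auto
    ultimately show "t \<in> (\<lambda>(i,t). i # t) ` ({..<k 0} \<times> tuples N (\<lambda>m. k (Suc m)))"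
      using tt by auto
  qed
next
  show "(\<lambda>(i,t). i # t) ` ({..<k 0} \<times> tuples N (\<lambda>m. k (Suc m))) \<subseteq> tuples (Suc N) k"
    unfolding tuples_def by (auto simp: less_Suc_eq_0_disj)
qed

lemma kron_list_Suc: "kron_list (map f [0..<Suc N]) = kron (f 0) (kron_list (map (\<lambda>m. f (Suc m)) [0..<N]))"
  unfolding kron_list_def map_upt_Suc by simp

lemma cert_base: "cert 1 (tuples 0 k) (\<lambda>t. 1\<^sub>m 1) (\<lambda>t. 1\<^sub>m 1) (1\<^sub>m 1)"
proof -
  have t0: "tuples 0 k = {[]}" unfolding tuples_def by auto
  have g1: "gramM 1 (1\<^sub>m 1)" unfolding gramM_def gramF_def ent_def
    by (auto intro!: exI[of _ "[\<lambda>_. 1]"])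
  have g0: "gramM 1 (1\<^sub>m 1 - 1\<^sub>m 1)" unfolding gramM_def gramF_def ent_def
    by (auto intro!: exI[of _ "[]"])
  have p: "povm 1 {[]} (\<lambda>t. 1\<^sub>m 1)" unfolding povm_def msum_def
    using g1 gramM_psd by (auto intro!: eq_matI)
  have tr: "mtrace (1\<^sub>m 1 :: complex mat) = 1" unfolding mtrace_def by simp
  show ?thesis unfolding cert_def t0 using p g1 g0 tr by simp
qed

lemma cert_prod:
  "(\<forall>m<N. cert (d m) {..<k m} (W m) (P m) (G m)) \<Longrightarrow>
   cert (\<Prod>m<N. d m) (tuples N k) (\<lambda>t. kron_list (map (\<lambda>m. W m (t ! m)) [0..<N]))
      (\<lambda>t. kron_list (map (\<lambda>m. P m (t ! m)) [0..<N])) (kron_list (map G [0..<N]))"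
proof (induct N arbitrary: d k W P G)
  case 0
  then show ?case using cert_base by (simp add: kron_list_def)
next
  case (Suc N)
  have c0: "cert (d 0) {..<k 0} (W 0) (P 0) (G 0)" using Suc(2) by auto
  have IH: "cert (\<Prod>m<N. d (Suc m)) (tuples N (\<lambda>m. k (Suc m)))
      (\<lambda>t. kron_list (map (\<lambda>m. W (Suc m) (t ! m)) [0..<N]))
      (\<lambda>t. kron_list (map (\<lambda>m. P (Suc m) (t ! m)) [0..<N])) (kron_list (map (\<lambda>m. G (Suc m)) [0..<N]))"
    using Suc(1)[of "\<lambda>m. d (Suc m)" "\<lambda>m. k (Suc m)" "\<lambda>m. W (Suc m)" "\<lambda>m. P (Suc m)" "\<lambda>m. G (Suc m)"] Suc(2)
    by auto
  note B = cert_binary[OF c0 IH]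
  have inj: "inj_on (\<lambda>(i,t). i # t) ({..<k 0} \<times> tuples N (\<lambda>m. k (Suc m)))"
    by (auto simp: inj_on_def)
  have "cert (d 0 * (\<Prod>m<N. d (Suc m))) ((\<lambda>(i,t). i # t) ` ({..<k 0} \<times> tuples N (\<lambda>m. k (Suc m))))
      (\<lambda>t. kron_list (map (\<lambda>m. W m (t ! m)) [0..<Suc N]))
      (\<lambda>t. kron_list (map (\<lambda>m. P m (t ! m)) [0..<Suc N])) (kron (G 0) (kron_list (map (\<lambda>m. G (Suc m)) [0..<N])))"
    by (rule cert_reindex[OF inj B]) (auto simp del: upt_Suc simp add: kron_list_Suc)
  then show ?case unfolding tuples_Suc prod.lessThan_Suc_shift kron_list_Suc[of G] .
qed



lemma qf_lin: "qf n (\<lambda>a b. F a b + t * H a b) z = qf n F z + t * qf n H z"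
  unfolding qf_def by (simp add: algebra_simps sum.distrib sum_distrib_left)

lemma qf_outer2: "qf n (\<lambda>a b. u a * cnj (v b)) z = cnj (gm n u z) * gm n v z"
proof -
  have "cnj (gm n u z) = (\<Sum>a<n. cnj (z a) * u a)" unfolding gm_def by (simp add: mult.commute)
  then show ?thesis unfolding qf_def gm_def by (simp add: sum_product mult_ac)
qed

lemma trp_lin: "trp n (\<lambda>a b. F a b + t * H a b) X = trp n F X + t * trp n H X"
  unfolding trp_def by (simp add: algebra_simps sum.distrib sum_distrib_left)

lemma trp_outer: "trp n (\<lambda>a b. u a * cnj (v b)) X = bf n X v u"
  unfolding trp_def bf_def by (subst sum.swap) (simp add: mult_ac)

lemma qf_sum: "finite I \<Longrightarrow> (\<Sum>i\<in>I. qf n (M i) x) = qf n (\<lambda>a b. \<Sum>i\<in>I. M i a b) x"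
  unfolding qf_def by (simp add: sum_distrib_left sum_distrib_right sum.swap[of _ I])

lemma bf_y: assumes h: "herm n P"
  shows "bf n X (\<lambda>c. \<Sum>b<n. P c b * x b) x = qf n (\<lambda>a b. \<Sum>c<n. P a c * X c b) x"
proof -
  have cy: "\<And>c. c < n \<Longrightarrow> cnj (\<Sum>b<n. P c b * x b) = (\<Sum>a<n. cnj (x a) * P a c)"
  proof -
    fix c assume c: "c < n"
    have "cnj (\<Sum>b<n. P c b * x b) = (\<Sum>a<n. cnj (P c a) * cnj (x a))" by simp
    also have "\<dots> = (\<Sum>a<n. cnj (x a) * P a c)"
    proof (rule sum.cong[OF refl])
      fix a assume "a \<in> {..<n}"
      then have "P a c = cnj (P c a)" using hermD[OF h c, of a] by simp
      then show "cnj (P c a) * cnj (x a) = cnj (x a) * P a c" by simp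
    qed
    finally show "cnj (\<Sum>b<n. P c b * x b) = (\<Sum>a<n. cnj (x a) * P a c)" .
  qed
  have "bf n X (\<lambda>c. \<Sum>b<n. P c b * x b) x = (\<Sum>c<n. \<Sum>b<n. (\<Sum>a<n. cnj (x a) * P a c) * X c b * x b)"
    unfolding bf_def using cy by (intro sum.cong refl) auto
  also have "\<dots> = (\<Sum>c<n. \<Sum>b<n. \<Sum>a<n. cnj (x a) * P a c * X c b * x b)"
    by (simp add: sum_distrib_right)
  also have "\<dots> = (\<Sum>c<n. \<Sum>a<n. \<Sum>b<n. cnj (x a) * P a c * X c b * x b)"
    by (rule sum.cong[OF refl]) (rule sum.swap)
  also have "\<dots> = (\<Sum>a<n. \<Sum>c<n. \<Sum>b<n. cnj (x a) * P a c * X c b * x b)"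
    by (rule sum.swap)
  also have "\<dots> = (\<Sum>a<n. \<Sum>b<n. \<Sum>c<n. cnj (x a) * P a c * X c b * x b)"
    by (rule sum.cong[OF refl]) (rule sum.swap)
  also have "\<dots> = qf n (\<lambda>a b. \<Sum>c<n. P a c * X c b) x"
    unfolding qf_def by (simp add: sum_distrib_left sum_distrib_right mult_ac)
  finally show ?thesis .
qed

definition cx :: "nat \<Rightarrow> (nat \<Rightarrow> complex) \<Rightarrow> complex" where "cx n x = (\<Sum>a<n. cnj (x a) * x a)"

lemma cx_real: "Im (cx n x) = 0" "0 \<le> Re (cx n x)"
  unfolding cx_def Re_sum Im_sum
  by (simp add: cnj_mult_self) (rule sum_nonneg, rule cnj_mult_self(1))

locale pert =
  fixes n :: nat and I :: "'i set" and pf :: "'i \<Rightarrow> nat \<Rightarrow> nat \<Rightarrow> complex"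
    and x :: "nat \<Rightarrow> complex" and j :: 'i and s :: real
  assumes fin: "finite I" and hm: "\<And>i. i \<in> I \<Longrightarrow> herm n (pf i)"
    and ps: "\<And>i z. i \<in> I \<Longrightarrow> 0 \<le> Re (qf n (pf i) z)"
    and one: "\<And>a b. a < n \<Longrightarrow> b < n \<Longrightarrow> (\<Sum>i\<in>I. pf i a b) = (if a = b then 1 else 0)"
    and jI: "j \<in> I" and s0: "0 \<le> s" and s1: "s * Re (cx n x) \<le> 1"
begin

definition y where "y i a = (\<Sum>b<n. pf i a b * x b)"
definition kap where "kap i = qf n (pf i) x"
definition sc where "sc = complex_of_real s"
definition ej where "ej i = (if i = j then 2 * sc - sc * sc * cx n x else 0)"
definition qe where "qe i a b = pf i a b + (- sc) * (x a * cnj (y i b)) + (- sc) * (y i a * cnj (x b))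
   + (sc * sc * kap i) * (x a * cnj (x b)) + ej i * (x a * cnj (x b))"

lemma kap_real: "i \<in> I \<Longrightarrow> cnj (kap i) = kap i"
  using qf_real[OF hm] unfolding kap_def by (metis complex_cnj_complex_of_real complex_eq_iff Re_complex_of_real Im_complex_of_real complex_cnj cnj.simps)

lemma cx_cnj: "cnj (cx n x) = cx n x"
  using cx_real(1) by (metis complex_cnj_complex_of_real complex_eq_iff Re_complex_of_real Im_complex_of_real complex_cnj cnj.simps)

lemma ej_cnj: "cnj (ej i) = ej i"
  unfolding ej_def sc_def using cx_cnj by auto

lemma ej_real: "ej i = complex_of_real (if i = j then 2 * s - s * s * Re (cx n x) else 0)"
  unfolding ej_def sc_def using cx_real(1)[of n x] by (auto simp: complex_eq_iff)

lemma ej_nonneg: "0 \<le> (if i = j then 2 * s - s * s * Re (cx n x) else 0)"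
proof -
  have "s * s * Re (cx n x) \<le> s" using s1 s0 by (metis mult.assoc mult_left_mono mult.right_neutral)
  then show ?thesis using s0 by auto
qed

lemma qe_herm: assumes i: "i \<in> I" shows "herm n (qe i)"
  unfolding herm_def
proof (intro allI impI)
  fix a b assume a: "a < n" and b: "b < n"
  have "pf i b a = cnj (pf i a b)" using hermD[OF hm[OF i] a b] .
  then show "qe i b a = cnj (qe i a b)"
    unfolding qe_def using kap_real[OF i] ej_cnj by (simp add: sc_def algebra_simps)
qed

lemma bf_P_zx: "bf n (pf i) z x = cnj (gm n (y i) z)"
proof -
  have "bf n (pf i) z x = (\<Sum>a<n. cnj (z a) * y i a)"
    unfolding bf_def y_def by (simp add: sum_distrib_left mult_ac)
  also have "\<dots> = cnj (gm n (y i) z)" unfolding gm_def by (simp add: mult.commute)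
  finally show ?thesis .
qed

lemma qe_qf: assumes i: "i \<in> I"
  shows "qf n (qe i) z = qf n (pf i) (\<lambda>a. z a + (- sc * gm n x z) * x a) + ej i * (cnj (gm n x z) * gm n x z)"
proof -
  let ?b = "gm n x z" and ?g = "gm n (y i) z"
  have "qf n (qe i) z = qf n (pf i) z + (- sc) * (cnj ?b * ?g) + (- sc) * (cnj ?g * ?b)
     + (sc * sc * kap i) * (cnj ?b * ?b) + ej i * (cnj ?b * ?b)"
    unfolding qe_def by (simp only: qf_lin qf_outer2)
  moreover have "qf n (pf i) (\<lambda>a. z a + (- sc * ?b) * x a) = qf n (pf i) z + (- sc) * (cnj ?b * ?g) + (- sc) * (cnj ?g * ?b)
     + (sc * sc * kap i) * (cnj ?b * ?b)"
  proof -
    have e1: "bf n (pf i) z x = cnj ?g" by (rule bf_P_zx)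
    have e2: "bf n (pf i) x z = ?g" using bf_herm[OF hm[OF i], of x z] e1 by simp
    have "qf n (pf i) (\<lambda>a. z a + (- sc * ?b) * x a) = qf n (pf i) z + bf n (pf i) z (\<lambda>a. (- sc * ?b) * x a)
       + bf n (pf i) (\<lambda>a. (- sc * ?b) * x a) z + qf n (pf i) (\<lambda>a. (- sc * ?b) * x a)"
      by (rule qf_add)
    also have "\<dots> = qf n (pf i) z + (- sc * ?b) * cnj ?g + cnj (- sc * ?b) * ?g
       + cnj (- sc * ?b) * ((- sc * ?b) * kap i)"
      by (simp only: bf_scale_left bf_scale_right qf_bf e1 e2 kap_def)
    also have "\<dots> = qf n (pf i) z + (- sc) * (cnj ?b * ?g) + (- sc) * (cnj ?g * ?b)
     + (sc * sc * kap i) * (cnj ?b * ?b)"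
      by (simp add: sc_def algebra_simps)
    finally show ?thesis .
  qed
  ultimately show ?thesis by simp
qed

lemma qe_pos: assumes i: "i \<in> I" shows "0 \<le> Re (qf n (qe i) z)"
proof -
  have "0 \<le> Re (ej i * (cnj (gm n x z) * gm n x z))"
    unfolding ej_real using ej_nonneg[of i] cnj_mult_self[of "gm n x z"] by simp
  then show ?thesis unfolding qe_qf[OF i] using ps[OF i] by (simp add: add_nonneg_nonneg)
qed

lemma y_sum: "a < n \<Longrightarrow> (\<Sum>i\<in>I. y i a) = x a"
proof -
  assume a: "a < n"
  have "(\<Sum>i\<in>I. y i a) = (\<Sum>b<n. (\<Sum>i\<in>I. pf i a b) * x b)"
    unfolding y_def by (simp add: sum_distrib_right sum.swap[of _ I])
  also have "\<dots> = (\<Sum>b<n. (if a = b then x b else 0))"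
    using one[OF a] by (intro sum.cong refl) auto
  also have "\<dots> = x a" using a by simp
  finally show ?thesis .
qed

lemma kap_sum: "(\<Sum>i\<in>I. kap i) = cx n x"
proof -
  have "(\<Sum>i\<in>I. kap i) = qf n (\<lambda>a b. \<Sum>i\<in>I. pf i a b) x" unfolding kap_def by (rule qf_sum[OF fin])
  also have "\<dots> = (\<Sum>a<n. \<Sum>b<n. cnj (x a) * (if a = b then 1 else 0) * x b)"
    unfolding qf_def using one by (intro sum.cong refl) auto
  also have "\<dots> = (\<Sum>a<n. \<Sum>b<n. if b = a then cnj (x a) * x a else 0)"
    by (intro sum.cong refl) auto
  also have "\<dots> = cx n x" unfolding cx_def by simp
  finally show ?thesis .
qed

lemma ej_sum: "(\<Sum>i\<in>I. ej i) = 2 * sc - sc * sc * cx n x"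
  unfolding ej_def using fin jI by simp

lemma qe_sum: assumes a: "a < n" and b: "b < n"
  shows "(\<Sum>i\<in>I. qe i a b) = (if a = b then 1 else 0)"
proof -
  have "(\<Sum>i\<in>I. qe i a b) = (\<Sum>i\<in>I. pf i a b) + (- sc) * (x a * cnj (\<Sum>i\<in>I. y i b))
     + (- sc) * ((\<Sum>i\<in>I. y i a) * cnj (x b)) + (sc * sc * (\<Sum>i\<in>I. kap i)) * (x a * cnj (x b))
     + (\<Sum>i\<in>I. ej i) * (x a * cnj (x b))"
    unfolding qe_def by (simp add: sum.distrib sum_distrib_left sum_distrib_right sum_subtractf sum_negf mult_ac)
  also have "\<dots> = (if a = b then 1 else 0)"
    unfolding one[OF a b] y_sum[OF a] y_sum[OF b] kap_sum ej_sum by (simp add: algebra_simps)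
  finally show ?thesis .
qed

end



context pert begin

lemma trp_qe: "trp n (qe i) X = trp n (pf i) X + (- sc) * bf n X (y i) x + (- sc) * bf n X x (y i)
   + (sc * sc * kap i) * bf n X x x + ej i * bf n X x x"
  unfolding qe_def by (simp only: trp_lin trp_outer)

lemma Re_trp_qe: assumes h: "herm n X"
  shows "Re (trp n (qe i) X) = Re (trp n (pf i) X) - 2 * s * Re (bf n X (y i) x)
     + s * s * Re (kap i * qf n X x) + (if i = j then 2 * s - s * s * Re (cx n x) else 0) * Re (qf n X x)"
proof -
  have c: "bf n X x (y i) = cnj (bf n X (y i) x)" by (rule bf_herm[OF h])
  show ?thesis unfolding trp_qe ej_real c qf_bf[symmetric] by (simp add: sc_def algebra_simps)
qed

end

lemma analytic:
  fixes L M \<delta> :: real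
  assumes d: "\<delta> > 0" and h: "\<And>s. 0 < s \<Longrightarrow> s \<le> \<delta> \<Longrightarrow> s * L + s * s * M \<le> 0"
  shows "L \<le> 0"
proof (rule ccontr)
  assume "\<not> L \<le> 0"
  then have L: "L > 0" by simp
  define s where "s = min \<delta> (L / (2 * (\<bar>M\<bar> + 1)))"
  have s0: "s > 0" unfolding s_def using d L by auto
  have sd: "s \<le> \<delta>" unfolding s_def by auto
  have sL: "s \<le> L / (2 * (\<bar>M\<bar> + 1))" unfolding s_def by auto
  have "s * \<bar>M\<bar> \<le> L / (2 * (\<bar>M\<bar> + 1)) * \<bar>M\<bar>" using mult_right_mono[OF sL, of "\<bar>M\<bar>"] by simp
  also have "\<dots> \<le> L / 2"
  proof -
    have m1: "\<bar>M\<bar> + 1 > 0" by simp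
    have "\<bar>M\<bar> / (\<bar>M\<bar> + 1) \<le> 1" by simp
    then have le: "L * (\<bar>M\<bar> / (\<bar>M\<bar> + 1)) \<le> L" using mult_left_le[of "\<bar>M\<bar> / (\<bar>M\<bar> + 1)" L] L by linarith
    have eq: "L / (2 * (\<bar>M\<bar> + 1)) * \<bar>M\<bar> = (L * (\<bar>M\<bar> / (\<bar>M\<bar> + 1))) / 2"
      using m1 by (simp add: field_simps)
    show ?thesis unfolding eq using divide_right_mono[OF le, of 2] by simp
  qed
  finally have sM: "s * \<bar>M\<bar> \<le> L / 2" .
  have "- (s * (s * \<bar>M\<bar>)) \<le> s * s * M"
  proof -
    have mm: "- \<bar>M\<bar> \<le> M" by simp
    have ss: "0 \<le> s * s" using s0 by simp
    have "s * s * (- \<bar>M\<bar>) \<le> s * s * M" using mult_left_mono[OF mm ss] .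
    then show ?thesis by (simp add: mult_ac)
  qed
  moreover have "s * (s * \<bar>M\<bar>) \<le> s * (L / 2)" using mult_left_mono[OF sM, of s] s0 by simp
  ultimately have "s * L + s * s * M \<ge> s * L - s * (L / 2)" by linarith
  moreover have "s * L > 0" using s0 L by simp
  ultimately show False using h[OF s0 sd] by linarith
qed

lemma qf_fcong: "(\<And>a b. a < n \<Longrightarrow> b < n \<Longrightarrow> f a b = g a b) \<Longrightarrow> qf n f x = qf n g x"
  unfolding qf_def by (intro sum.cong refl) auto
lemma trp_fcong: "(\<And>a b. a < n \<Longrightarrow> b < n \<Longrightarrow> f a b = g a b) \<Longrightarrow> (\<And>a b. a < n \<Longrightarrow> b < n \<Longrightarrow> X a b = Y a b)
  \<Longrightarrow> trp n f X = trp n g Y"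
  unfolding trp_def by (intro sum.cong refl) auto
lemma herm_fcong: assumes h: "herm n f" and e: "\<And>a b. a < n \<Longrightarrow> b < n \<Longrightarrow> g a b = f a b" shows "herm n g"
  unfolding herm_def
proof (intro allI impI)
  fix a b assume a: "a < n" and b: "b < n"
  have "g b a = f b a" using e a b by blast
  also have "\<dots> = cnj (f a b)" using hermD[OF h a b] .
  also have "\<dots> = cnj (g a b)" using e a b by simp
  finally show "g b a = cnj (g a b)" .
qed

lemma gramF_scale: assumes "gramF n f" "0 \<le> c" shows "gramF n (\<lambda>a b. complex_of_real c * f a b)"
proof -
  obtain us where us: "\<forall>a<n. \<forall>b<n. f a b = (\<Sum>u\<leftarrow>us. u a * cnj (u b))"
    using assms unfolding gramF_def by blast
  have sq: "complex_of_real (sqrt c) * complex_of_real (sqrt c) = complex_of_real c"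
    using assms(2) by (simp flip: of_real_mult)
  show ?thesis unfolding gramF_def
  proof (intro exI[of _ "map (\<lambda>u a. complex_of_real (sqrt c) * u a) us"] allI impI)
    fix a b assume "a < n" "b < n"
    then have "complex_of_real c * f a b = (\<Sum>u\<leftarrow>us. (complex_of_real (sqrt c) * complex_of_real (sqrt c)) * (u a * cnj (u b)))"
      using us sq by (simp add: sl_cmult)
    also have "\<dots> = (\<Sum>u\<leftarrow>map (\<lambda>u a. complex_of_real (sqrt c) * u a) us. u a * cnj (u b))"
      by (simp add: comp_def mult_ac)
    finally show "complex_of_real c * f a b = (\<Sum>u\<leftarrow>map (\<lambda>u a. complex_of_real (sqrt c) * u a) us. u a * cnj (u b))" .
  qed
qed

lemma qf_adj: "qf n (\<lambda>a b. cnj (f b a)) x = cnj (qf n f x)"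
proof -
  have "cnj (qf n f x) = (\<Sum>a<n. \<Sum>b<n. x a * cnj (f a b) * cnj (x b))" unfolding qf_def by simp
  also have "\<dots> = (\<Sum>b<n. \<Sum>a<n. x a * cnj (f a b) * cnj (x b))" by (rule sum.swap)
  also have "\<dots> = qf n (\<lambda>a b. cnj (f b a)) x" unfolding qf_def by (simp add: mult_ac)
  finally show ?thesis by simp
qed

lemma qf_half: "qf n (\<lambda>a b. (F a b + H a b) / 2) x = (qf n F x + qf n H x) / 2"
proof -
  have "qf n (\<lambda>a b. (F a b + H a b) / 2) x = (\<Sum>a<n. \<Sum>b<n. (cnj (x a) * F a b * x b + cnj (x a) * H a b * x b) / 2)"
    unfolding qf_def by (intro sum.cong refl) (simp add: algebra_simps add_divide_distrib)
  also have "\<dots> = (qf n F x + qf n H x) / 2"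
    unfolding qf_def by (simp only: sum_divide_distrib[symmetric] sum.distrib)
  finally show ?thesis .
qed



lemma herm_diff: assumes "herm n f" "herm n g" shows "herm n (\<lambda>a b. f a b - g a b)"
  unfolding herm_def
proof (intro allI impI)
  fix a b assume a: "a < n" and b: "b < n"
  show "f b a - g b a = cnj (f a b - g a b)"
    using hermD[OF assms(1) a b] hermD[OF assms(2) a b] by simp
qed

lemma mtrace_smult: assumes "A \<in> carrier_mat n n" "B \<in> carrier_mat n n"
  shows "mtrace (A * (c \<cdot>\<^sub>m B)) = c * mtrace (A * B)"
  using assms unfolding mult_smult_distrib[OF assms] mtrace_def
  by (simp add: sum_distrib_left)

lemma Re_half: "Re ((z + cnj z) / 2) = Re z"
  by simp

lemma necessity:
  assumes ens: "ensemble n I p \<rho>" and opt: "optimal_povm n I p \<rho> P"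
  shows "\<exists>G. cert n I (\<lambda>i. complex_of_real (p i) \<cdot>\<^sub>m \<rho> i) P G"
proof -
  define W where "W i = complex_of_real (p i) \<cdot>\<^sub>m \<rho> i" for i
  define w where "w i = ent (W i)" for i
  define pf where "pf i = ent (P i)" for i
  have fin: "finite I" using ens unfolding ensemble_def by auto
  have pv: "povm n I P" using opt unfolding optimal_povm_def by auto
  have Pc: "\<And>i. i \<in> I \<Longrightarrow> P i \<in> carrier_mat n n \<and> gramM n (P i)" using povm_psd[OF pv] by auto
  have hmP: "\<And>i. i \<in> I \<Longrightarrow> herm n (pf i)" using Pc gramF_herm unfolding gramM_def pf_def by blast
  have psP: "\<And>i z. i \<in> I \<Longrightarrow> 0 \<le> Re (qf n (pf i) z)" using Pc gramF_qf unfolding gramM_def pf_def by blast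
  have one: "\<And>a b. a < n \<Longrightarrow> b < n \<Longrightarrow> (\<Sum>i\<in>I. pf i a b) = (if a = b then 1 else 0)"
  proof -
    fix a b assume a: "a < n" and b: "b < n"
    have "(\<Sum>i\<in>I. pf i a b) = ent (msum n P I) a b" unfolding pf_def using msum_ent[OF a b, of P I] by simp
    also have "\<dots> = (if a = b then 1 else 0)" using pv a b unfolding povm_def ent_def by auto
    finally show "(\<Sum>i\<in>I. pf i a b) = (if a = b then 1 else 0)" .
  qed
  have rc: "\<And>i. i \<in> I \<Longrightarrow> \<rho> i \<in> carrier_mat n n \<and> gramM n (\<rho> i)"
    using ens gramM_psd unfolding ensemble_def density_def psd_def by blast
  have Wg: "\<And>i. i \<in> I \<Longrightarrow> gramM n (W i)"
  proof -
    fix i assume i: "i \<in> I"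
    have r: "\<rho> i \<in> carrier_mat n n" "gramF n (ent (\<rho> i))" using rc[OF i] unfolding gramM_def by auto
    have pi: "0 \<le> p i" using ens i unfolding ensemble_def by auto
    have "gramF n (ent (W i))"
      by (rule gramF_cong[OF gramF_scale[OF r(2) pi]]) (use r(1) in \<open>auto simp: W_def ent_def\<close>)
    moreover have "W i \<in> carrier_mat n n" using r(1) unfolding W_def by auto
    ultimately show "gramM n (W i)" unfolding gramM_def by auto
  qed
  have Wc: "\<And>i. i \<in> I \<Longrightarrow> W i \<in> carrier_mat n n" using Wg unfolding gramM_def by auto
  have hmW: "\<And>i. i \<in> I \<Longrightarrow> herm n (w i)" using Wg gramF_herm unfolding gramM_def w_def by blast
  define \<Gamma> where "\<Gamma> a b = (\<Sum>i\<in>I. \<Sum>c<n. pf i a c * w i c b)" for a b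
  define gf where "gf a b = (\<Gamma> a b + cnj (\<Gamma> b a)) / 2" for a b
  define G where "G = mat n n (\<lambda>(a,b). gf a b)"
  have entG: "\<And>a b. a < n \<Longrightarrow> b < n \<Longrightarrow> ent G a b = gf a b" unfolding G_def ent_def by simp
  have Gc: "G \<in> carrier_mat n n" unfolding G_def by simp
  have hmG: "herm n gf" unfolding herm_def gf_def by (simp add: add.commute)
  have qfG: "\<And>x. Re (qf n gf x) = Re (qf n \<Gamma> x)"
  proof -
    fix x
    have "qf n gf x = (qf n \<Gamma> x + qf n (\<lambda>a b. cnj (\<Gamma> b a)) x) / 2" unfolding gf_def by (rule qf_half)
    also have "\<dots> = (qf n \<Gamma> x + cnj (qf n \<Gamma> x)) / 2" by (simp only: qf_adj)
    finally show "Re (qf n gf x) = Re (qf n \<Gamma> x)" by (simp only: Re_half)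
  qed
  have succ: "\<And>R. povm n I R \<Longrightarrow> success I p \<rho> R = (\<Sum>i\<in>I. Re (trp n (ent (R i)) (w i)))"
  proof -
    fix R assume R: "povm n I R"
    show "success I p \<rho> R = (\<Sum>i\<in>I. Re (trp n (ent (R i)) (w i)))"
      unfolding success_def
    proof (rule sum.cong[OF refl])
      fix i assume i: "i \<in> I"
      have Ri: "R i \<in> carrier_mat n n" using povm_psd[OF R i] by auto
      have "Re (mtrace (R i * W i)) = p i * Re (mtrace (R i * \<rho> i))"
        unfolding W_def using mtrace_smult[OF Ri conjunct1[OF rc[OF i]], of "complex_of_real (p i)"] by simp
      then show "p i * Re (mtrace (R i * \<rho> i)) = Re (trp n (ent (R i)) (w i))"
        using mtrace_mult[OF Ri Wc[OF i]] unfolding w_def by simp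
    qed
  qed
  have key: "\<And>j x. j \<in> I \<Longrightarrow> Re (qf n (w j) x) \<le> Re (qf n \<Gamma> x)"
  proof -
    fix j x assume j: "j \<in> I"
    define cr where "cr = Re (cx n x)"
    have cr0: "0 \<le> cr" unfolding cr_def by (rule cx_real(2))
    define L where "L = 2 * (Re (qf n (w j) x) - Re (qf n \<Gamma> x))"
    define M where "M = (\<Sum>i\<in>I. Re (qf n (pf i) x * qf n (w i) x)) - cr * Re (qf n (w j) x)"
    have "L \<le> 0"
    proof (rule analytic[of "1 / (cr + 1)" L M])
      show "0 < 1 / (cr + 1)" using cr0 by simp
    next
      fix s :: real assume s0: "0 < s" and sd: "s \<le> 1 / (cr + 1)"
      have s1: "s * Re (cx n x) \<le> 1"
      proof -
        have "s * cr \<le> cr / (cr + 1)" using mult_right_mono[OF sd cr0] by simp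
        also have "\<dots> \<le> 1" using cr0 by simp
        finally show ?thesis unfolding cr_def .
      qed
      interpret pt: pert n I pf x j s
        by (unfold_locales) (use fin hmP psP one j s0 s1 in auto)
      define Q where "Q i = mat n n (\<lambda>(a,b). pt.qe i a b)" for i
      have entQ: "\<And>i a b. a < n \<Longrightarrow> b < n \<Longrightarrow> ent (Q i) a b = pt.qe i a b" unfolding Q_def ent_def by simp
      have povmQ: "povm n I Q" unfolding povm_def
      proof (intro conjI ballI)
        show "finite I" by (rule fin)
      next
        fix i assume i: "i \<in> I"
        show "psd n (Q i)" unfolding psd_iff
        proof (intro conjI allI)
          show "Q i \<in> carrier_mat n n" unfolding Q_def by simp
          show "herm n (ent (Q i))" by (rule herm_fcong[OF pt.qe_herm[OF i]]) (rule entQ)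
          fix z show "0 \<le> Re (qf n (ent (Q i)) z)"
            using pt.qe_pos[OF i, of z] qf_fcong[of n "ent (Q i)" "pt.qe i" z] entQ by simp
        qed
      next
        show "msum n Q I = 1\<^sub>m n"
        proof (rule eq_matI)
          fix a b assume a: "a < dim_row (1\<^sub>m n)" and b: "b < dim_col (1\<^sub>m n)"
          then have a': "a < n" and b': "b < n" by auto
          have "msum n Q I $$ (a,b) = (\<Sum>i\<in>I. pt.qe i a b)"
            unfolding msum_def using a' b' entQ unfolding ent_def by simp
          also have "\<dots> = 1\<^sub>m n $$ (a,b)" using pt.qe_sum[OF a' b'] a' b' by simp
          finally show "msum n Q I $$ (a,b) = 1\<^sub>m n $$ (a,b)" .
        qed (auto simp: msum_def)
      qed
      have "success I p \<rho> Q \<le> success I p \<rho> P" using opt povmQ unfolding optimal_povm_def by blast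
      moreover have eqQ: "\<And>i. trp n (ent (Q i)) (w i) = trp n (pt.qe i) (w i)"
        by (rule trp_fcong) (auto simp: entQ)
      moreover have "\<And>i. ent (P i) = pf i" by (simp add: pf_def)
      ultimately have ineq: "(\<Sum>i\<in>I. Re (trp n (pt.qe i) (w i))) \<le> (\<Sum>i\<in>I. Re (trp n (pf i) (w i)))"
        unfolding succ[OF povmQ] succ[OF pv] by simp
      have exp: "(\<Sum>i\<in>I. Re (trp n (pt.qe i) (w i))) = (\<Sum>i\<in>I. Re (trp n (pf i) (w i)))
          - 2 * s * (\<Sum>i\<in>I. Re (bf n (w i) (pt.y i) x))
          + s * s * (\<Sum>i\<in>I. Re (pt.kap i * qf n (w i) x))
          + (2 * s - s * s * cr) * Re (qf n (w j) x)"
      proof -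
        have "(\<Sum>i\<in>I. Re (trp n (pt.qe i) (w i))) = (\<Sum>i\<in>I. Re (trp n (pf i) (w i)) - 2 * s * Re (bf n (w i) (pt.y i) x)
            + s * s * Re (pt.kap i * qf n (w i) x) + (if i = j then 2 * s - s * s * Re (cx n x) else 0) * Re (qf n (w i) x))"
          using pt.Re_trp_qe[OF hmW] by (intro sum.cong refl) auto
        also have "\<dots> = (\<Sum>i\<in>I. Re (trp n (pf i) (w i))) - 2 * s * (\<Sum>i\<in>I. Re (bf n (w i) (pt.y i) x))
            + s * s * (\<Sum>i\<in>I. Re (pt.kap i * qf n (w i) x))
            + (\<Sum>i\<in>I. (if i = j then 2 * s - s * s * Re (cx n x) else 0) * Re (qf n (w i) x))"
          by (simp only: sum.distrib sum_subtractf sum_distrib_left)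
        also have "(\<Sum>i\<in>I. (if i = j then 2 * s - s * s * Re (cx n x) else 0) * Re (qf n (w i) x))
            = (2 * s - s * s * cr) * Re (qf n (w j) x)"
        proof -
          have "(\<Sum>i\<in>I. (if i = j then 2 * s - s * s * Re (cx n x) else 0) * Re (qf n (w i) x))
             = (\<Sum>i\<in>I. if i = j then (2 * s - s * s * cr) * Re (qf n (w j) x) else 0)"
            unfolding cr_def by (intro sum.cong refl) auto
          then show ?thesis using fin j by simp
        qed
        finally show ?thesis .
      qed
      have bsum: "(\<Sum>i\<in>I. Re (bf n (w i) (pt.y i) x)) = Re (qf n \<Gamma> x)"
      proof -
        have "(\<Sum>i\<in>I. bf n (w i) (pt.y i) x) = (\<Sum>i\<in>I. qf n (\<lambda>a b. \<Sum>c<n. pf i a c * w i c b) x)"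
          using bf_y[OF hmP] unfolding pt.y_def[abs_def] by (intro sum.cong refl) auto
        also have "\<dots> = qf n \<Gamma> x" unfolding \<Gamma>_def[abs_def] by (rule qf_sum[OF fin])
        finally show ?thesis by (simp flip: Re_sum)
      qed
      have ksum: "(\<Sum>i\<in>I. Re (pt.kap i * qf n (w i) x)) = (\<Sum>i\<in>I. Re (qf n (pf i) x * qf n (w i) x))"
        unfolding pt.kap_def by simp
      show "s * L + s * s * M \<le> 0"
        using ineq unfolding exp bsum ksum L_def M_def by (simp add: algebra_simps)
    qed
    then show "Re (qf n (w j) x) \<le> Re (qf n \<Gamma> x)" unfolding L_def by simp
  qed
  have gGW: "\<And>j. j \<in> I \<Longrightarrow> gramM n (G - W j)"
  proof -
    fix j assume j: "j \<in> I"
    have e: "\<And>a b. a < n \<Longrightarrow> b < n \<Longrightarrow> ent (G - W j) a b = gf a b - w j a b"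
      using entG Wc[OF j] unfolding ent_def w_def by auto
    have "gramF n (ent (G - W j))"
    proof (rule decomp)
      show "herm n (ent (G - W j))" by (rule herm_fcong[OF herm_diff[OF hmG hmW[OF j]]]) (rule e)
      show "\<forall>x. 0 \<le> Re (qf n (ent (G - W j)) x)"
      proof
        fix x
        have "qf n (ent (G - W j)) x = qf n gf x - qf n (w j) x"
          using qf_fcong[of n "ent (G - W j)" "\<lambda>a b. gf a b - w j a b" x] e qf_diff by simp
        then show "0 \<le> Re (qf n (ent (G - W j)) x)" using key[OF j, of x] qfG[of x] by simp
      qed
    qed
    moreover have "G - W j \<in> carrier_mat n n" using Gc Wc[OF j] by auto
    ultimately show "gramM n (G - W j)" unfolding gramM_def by auto
  qed
  have gG: "gramM n G"
  proof (cases "I = {}")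
    case True
    have "n = 0"
    proof (rule ccontr)
      assume "n \<noteq> 0"
      then have "msum n P I $$ (0,0) = 1\<^sub>m n $$ (0,0)" using pv unfolding povm_def by simp
      then show False using \<open>n \<noteq> 0\<close> True unfolding msum_def by simp
    qed
    then show ?thesis unfolding gramM_def gramF_def using Gc by auto
  next
    case False
    then obtain j where j: "j \<in> I" by auto
    have "gramF n (\<lambda>a b. ent (G - W j) a b + w j a b)"
      using gramF_add gGW[OF j] Wg[OF j] unfolding gramM_def w_def by blast
    then have "gramF n (ent G)" by (rule gramF_cong) (use Wc[OF j] Gc in \<open>auto simp: ent_def w_def\<close>)
    then show ?thesis unfolding gramM_def using Gc by auto
  qed
  have tr: "Re (mtrace G) = (\<Sum>i\<in>I. Re (mtrace (P i * W i)))"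
  proof -
    have "mtrace G = (\<Sum>a<n. gf a a)" unfolding mtrace_def G_def by simp
    then have "Re (mtrace G) = (\<Sum>a<n. Re (\<Gamma> a a))" unfolding gf_def by (simp add: Re_sum Re_half)
    also have "\<dots> = Re (\<Sum>a<n. \<Gamma> a a)" by (simp add: Re_sum)
    also have "(\<Sum>a<n. \<Gamma> a a) = (\<Sum>i\<in>I. trp n (pf i) (w i))"
      unfolding \<Gamma>_def trp_def by (rule sum.swap)
    also have "\<dots> = (\<Sum>i\<in>I. mtrace (P i * W i))"
    proof (rule sum.cong[OF refl])
      fix i assume i: "i \<in> I"
      show "trp n (pf i) (w i) = mtrace (P i * W i)"
        unfolding pf_def w_def using mtrace_mult[of "P i" n "W i"] Pc[OF i] Wc[OF i] by simp
    qed
    finally show ?thesis by (simp add: Re_sum)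
  qed
  have "cert n I W P G" unfolding cert_def using pv gG Wg gGW tr by auto
  then show ?thesis unfolding W_def by blast
qed



lemma kron_smult: "kron (c \<cdot>\<^sub>m A) (e \<cdot>\<^sub>m B) = (c * e) \<cdot>\<^sub>m kron A B"
proof (rule eq_matI)
  fix i j assume i: "i < dim_row ((c * e) \<cdot>\<^sub>m kron A B)" and j: "j < dim_col ((c * e) \<cdot>\<^sub>m kron A B)"
  then have i': "i < dim_row A * dim_row B" and j': "j < dim_col A * dim_col B" unfolding kron_def by auto
  note bi = divmod_bounds[OF i'] and bj = divmod_bounds[OF j']
  show "kron (c \<cdot>\<^sub>m A) (e \<cdot>\<^sub>m B) $$ (i, j) = ((c * e) \<cdot>\<^sub>m kron A B) $$ (i, j)"
    using i' j' bi bj unfolding kron_def by simp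
qed (auto simp: kron_def)

lemma kron_list_smult: "kron_list (map (\<lambda>m. c m \<cdot>\<^sub>m A m) xs) = prod_list (map c xs) \<cdot>\<^sub>m kron_list (map A xs)"
proof (induct xs)
  case Nil
  have "(1::complex) \<cdot>\<^sub>m 1\<^sub>m 1 = 1\<^sub>m 1" by (rule eq_matI) auto
  then show ?case unfolding kron_list_def by simp
next
  case (Cons x xs)
  then show ?case unfolding kron_list_def by (simp add: kron_smult)
qed

lemma prod_list_upt: "prod_list (map f [0..<N]) = (\<Prod>m<N. f m)"
  by (induct N) (auto simp: mult.commute)

lemma cert_congW: "cert n I W P G \<Longrightarrow> (\<And>i. i \<in> I \<Longrightarrow> W i = W' i) \<Longrightarrow> cert n I W' P G"
  unfolding cert_def by auto

theorem mainTheorem15: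
  fixes N :: nat and d k :: "nat \<Rightarrow> nat"
    and q :: "nat \<Rightarrow> nat \<Rightarrow> real"
    and \<sigma> Pov :: "nat \<Rightarrow> nat \<Rightarrow> complex mat"
  assumes ens: "\<forall>m<N. ensemble (d m) {..<k m} (q m) (\<sigma> m)"
    and opt: "\<forall>m<N. optimal_povm (d m) {..<k m} (q m) (\<sigma> m) (Pov m)"
  shows "optimal_povm (\<Prod>m<N. d m) (tuples N k)
           (\<lambda>t. \<Prod>m<N. q m (t ! m))
           (\<lambda>t. kron_list (map (\<lambda>m. \<sigma> m (t ! m)) [0..<N]))
           (\<lambda>t. kron_list (map (\<lambda>m. Pov m (t ! m)) [0..<N]))"
proof -
  have "\<forall>m. \<exists>G. m < N \<longrightarrow> cert (d m) {..<k m} (\<lambda>i. complex_of_real (q m i) \<cdot>\<^sub>m \<sigma> m i) (Pov m) G"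
    using necessity ens opt by blast
  then obtain G where G: "\<forall>m<N. cert (d m) {..<k m} (\<lambda>i. complex_of_real (q m i) \<cdot>\<^sub>m \<sigma> m i) (Pov m) (G m)"
    by metis
  let ?D = "\<Prod>m<N. d m"
  let ?p = "\<lambda>t. \<Prod>m<N. q m (t ! m)"
  let ?r = "\<lambda>t. kron_list (map (\<lambda>m. \<sigma> m (t ! m)) [0..<N])"
  let ?P = "\<lambda>t. kron_list (map (\<lambda>m. Pov m (t ! m)) [0..<N])"
  have c0: "cert ?D (tuples N k) (\<lambda>t. kron_list (map (\<lambda>m. complex_of_real (q m (t ! m)) \<cdot>\<^sub>m \<sigma> m (t ! m)) [0..<N]))
      ?P (kron_list (map G [0..<N]))"
    using cert_prod[of N d k "\<lambda>m i. complex_of_real (q m i) \<cdot>\<^sub>m \<sigma> m i" Pov G] G by simp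
  have c: "cert ?D (tuples N k) (\<lambda>t. complex_of_real (?p t) \<cdot>\<^sub>m ?r t) ?P (kron_list (map G [0..<N]))"
    by (rule cert_congW[OF c0]) (simp add: kron_list_smult prod_list_upt)
  have povm: "povm ?D (tuples N k) ?P" using c unfolding cert_def by auto
  have rc: "\<And>t. t \<in> tuples N k \<Longrightarrow> ?r t \<in> carrier_mat ?D ?D"
  proof -
    fix t assume "t \<in> tuples N k"
    then have "gramM ?D (complex_of_real (?p t) \<cdot>\<^sub>m ?r t)" using c unfolding cert_def by auto
    then have "complex_of_real (?p t) \<cdot>\<^sub>m ?r t \<in> carrier_mat ?D ?D" unfolding gramM_def by blast
    then show "?r t \<in> carrier_mat ?D ?D"
      by (metis carrier_matD(1) carrier_matD(2) carrier_matI index_smult_mat(2) index_smult_mat(3))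
  qed
  have sc: "\<And>Q. povm ?D (tuples N k) Q \<Longrightarrow> success (tuples N k) ?p ?r Q
       = (\<Sum>t\<in>tuples N k. Re (mtrace (Q t * (complex_of_real (?p t) \<cdot>\<^sub>m ?r t))))"
  proof -
    fix Q assume Q: "povm ?D (tuples N k) Q"
    show "success (tuples N k) ?p ?r Q = (\<Sum>t\<in>tuples N k. Re (mtrace (Q t * (complex_of_real (?p t) \<cdot>\<^sub>m ?r t))))"
      unfolding success_def
    proof (rule sum.cong[OF refl])
      fix t assume t: "t \<in> tuples N k"
      have "Q t \<in> carrier_mat ?D ?D" using povm_psd[OF Q t] by auto
      then show "?p t * Re (mtrace (Q t * ?r t)) = Re (mtrace (Q t * (complex_of_real (?p t) \<cdot>\<^sub>m ?r t)))"
        using mtrace_smult[OF _ rc[OF t], of "Q t" "complex_of_real (?p t)"] by (simp del: of_real_prod)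
    qed
  qed
  show ?thesis unfolding optimal_povm_def
  proof (intro conjI allI impI)
    show "povm ?D (tuples N k) ?P" by (rule povm)
  next
    fix Q assume Q: "povm ?D (tuples N k) Q"
    show "success (tuples N k) ?p ?r Q \<le> success (tuples N k) ?p ?r ?P"
      unfolding sc[OF Q] sc[OF povm] by (rule cert_sound[OF c Q])
  qed
qed


end
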